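(* A Q-net $f:\mathbb Z^m\to\mathbb R^N$ ($m\ge2$) is a discrete Koenigs net if and only if the multiplicative one-form $q$ of ratios of diagonal segments is closed on both the black graph and the white graph of $\mathbb Z^m$.
   Context: Let $N\ge 3$, $m\ge 2$. For a map $f:\mathbb Z^m\to\mathbb R^N$, write $e_i$ for the $i$-th unit vector of $\mathbb Z^m$, $f=f(u)$, $f_i=f(u+e_i)$, $f_{ij}=f(u+e_i+e_j)$; negative indices denote backward shifts, e.g. $f_{-1}=f(u-e_1)$, $f_{1,-2}=f(u+e_1-e_2)$; $\delta_i f=f_i-f$, and $\tau_i g(u)=g(u+e_i)$ for any function $g$ on $\mathbb Z^m$. A Q-net is a map $f:\mathbb Z^m\to\mathbb R^N$ such that for every $u$ and $i\ne j$ the elementary quadrilateral $(f,f_i,f_{ij},f_j)$ is planar; elementary quadrilaterals are assumed non-degenerate: four distinct vertices, no three collinear, and the diagonals $(ff_{ij})$, $(f_if_j)$ meet in a point $M$ different from all vertices. Two planar quadrilaterals $(A,B,C,D)$, $(A^*,B^*,C^*,D^* )$ are dual if corresponding sides are parallel ($A^*B^*\parallel AB$, $B^*C^*\parallel BC$, $C^*D^*\parallel CD$, $D^*A^*\parallel DA$) and non-corresponding diagonals are parallel ($A^*C^*\parallel BD$, $B^*D^*\parallel AC$). A Q-net $f$ is a discrete Koenigs net if there is a Q-net $f^*:\mathbb Z^m\to\mathbb R^N$ (a dual net) such that each $(f^*,f^*_i,f^*_{ij},f^*_j)$ is dual to $(f,f_i,f_{ij},f_j)$, i.e. $\delta_if^*\parallel\delta_if$,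 $\delta_jf^*\parallel\delta_jf$, $f^*_{ij}-f^*\parallel f_i-f_j$, $f^*_i-f^*_j\parallel f_{ij}-f$. For collinear points $P,Q$, $l(P,Q)$ denotes the directed (signed) length along their line (ratios of such lengths on one line are orientation-independent). Color $u\in\mathbb Z^m$ black if $u_1+\dots+u_m$ is even and white otherwise. Each elementary square $(u,u+e_i,u+e_i+e_j,u+e_j)$ has one diagonal joining two black points and one joining two white points. The black (resp. white) graph has as vertices the black (resp. white) points of $\mathbb Z^m$ and as edges the black (resp. white) diagonals of all elementary squares. For a Q-net $f$ and the quadrilateral $(f,f_i,f_{ij},f_j)$ with diagonal intersection $M$, set $q(u\to u+e_i+e_j)=l(M,f_{ij})/l(M,f)$ and $q(u+e_i\to u+e_j)=l(M,f_j)/l(M,f_i)$, with reversed direction giving the reciprocal value. A function $q$ on directed edges of a graph with $q(-e)=1/q(e)$ is a multiplicative one-form; it is closed if its product along every closed cycle of directed edges equals $1$. *)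

theory Defs
  imports "HOL-Analysis.Analysis"
begin

text \<open>Lattice points of Z^m are vectors of type int^'m (m = CARD('m)),
  points of R^N are vectors of type real^'n (N = CARD('n)).\<close>

definition ue :: "'m::finite \<Rightarrow> int^'m" where
  "ue i = axis i 1"

definition line_thr :: "real^'n \<Rightarrow> real^'n \<Rightarrow> (real^'n) set" where
  "line_thr P Q = affine hull {P, Q}"

definition nondeg_planar_quad :: "real^'n \<Rightarrow> real^'n \<Rightarrow> real^'n \<Rightarrow> real^'n \<Rightarrow> bool" where
  "nondeg_planar_quad A B C D \<longleftrightarrow>
     coplanar {A, B, C, D} \<and>
     distinct [A, B, C, D] \<and>
     \<not> collinear {A, B, C} \<and> \<not> collinear {A, B, D} \<and>
     \<not> collinear {A, C, D} \<and> \<not> collinear {B, C, D} \<and>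
     (\<exists>M. M \<in> line_thr A C \<and> M \<in> line_thr B D \<and> M \<notin> {A, B, C, D})"

definition diag_int :: "real^'n \<Rightarrow> real^'n \<Rightarrow> real^'n \<Rightarrow> real^'n \<Rightarrow> real^'n" where
  "diag_int A B C D = (THE M. M \<in> line_thr A C \<and> M \<in> line_thr B D)"

definition is_Qnet :: "(int^'m::finite \<Rightarrow> real^'n::finite) \<Rightarrow> bool" where
  "is_Qnet f \<longleftrightarrow> (\<forall>u i j. i \<noteq> j \<longrightarrow>
     nondeg_planar_quad (f u) (f (u + ue i)) (f (u + ue i + ue j)) (f (u + ue j)))"

definition par :: "real^'n \<Rightarrow> real^'n \<Rightarrow> bool" where
  "par v w \<longleftrightarrow> (\<exists>c::real. v = c *\<^sub>R w)"

definition dual_quad :: "real^'n \<Rightarrow> real^'n \<Rightarrow> real^'n \<Rightarrow> real^'n \<Rightarrow>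
    real^'n \<Rightarrow> real^'n \<Rightarrow> real^'n \<Rightarrow> real^'n \<Rightarrow> bool" where
  "dual_quad A B C D A' B' C' D' \<longleftrightarrow>
     par (B' - A') (B - A) \<and> par (C' - B') (C - B) \<and>
     par (D' - C') (D - C) \<and> par (A' - D') (A - D) \<and>
     par (C' - A') (D - B) \<and> par (D' - B') (C - A)"

definition is_Koenigs :: "(int^'m::finite \<Rightarrow> real^'n::finite) \<Rightarrow> bool" where
  "is_Koenigs f \<longleftrightarrow> (\<exists>fs :: int^'m \<Rightarrow> real^'n. is_Qnet fs \<and>
     (\<forall>u i j. i \<noteq> j \<longrightarrow>
        dual_quad (f u) (f (u + ue i)) (f (u + ue i + ue j)) (f (u + ue j))
                  (fs u) (fs (u + ue i)) (fs (u + ue i + ue j)) (fs (u + ue j))))"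

text \<open>Ratio of directed lengths l(M,P)/l(M,Q) for collinear M,P,Q with Q \<noteq> M.\<close>
definition sratio :: "real^'n \<Rightarrow> real^'n \<Rightarrow> real^'n \<Rightarrow> real" where
  "sratio M P Q = (THE t. P - M = t *\<^sub>R (Q - M))"

definition sqM :: "(int^'m::finite \<Rightarrow> real^'n) \<Rightarrow> int^'m \<Rightarrow> 'm \<Rightarrow> 'm \<Rightarrow> real^'n" where
  "sqM f u i j = diag_int (f u) (f (u + ue i)) (f (u + ue i + ue j)) (f (u + ue j))"

definition diag_edge :: "int^'m::finite \<Rightarrow> int^'m \<Rightarrow> bool" where
  "diag_edge a b \<longleftrightarrow> (\<exists>u i j. i \<noteq> j \<and>
     ({a, b} = {u, u + ue i + ue j} \<or> {a, b} = {u + ue i, u + ue j}))"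

text \<open>The multiplicative one-form q on the directed diagonal edge a \<rightarrow> b:
  q(a \<rightarrow> b) = l(M, f b) / l(M, f a), M the diagonal intersection of the
  elementary quadrilateral containing the diagonal.\<close>
definition qform :: "(int^'m::finite \<Rightarrow> real^'n) \<Rightarrow> int^'m \<Rightarrow> int^'m \<Rightarrow> real" where
  "qform f a b = (THE x. \<exists>u i j. i \<noteq> j \<and>
     ({a, b} = {u, u + ue i + ue j} \<or> {a, b} = {u + ue i, u + ue j}) \<and>
     x = sratio (sqM f u i j) (f b) (f a))"

definition black :: "int^'m::finite \<Rightarrow> bool" where
  "black u \<longleftrightarrow> even (\<Sum>k\<in>UNIV. u $ k)"

definition white :: "int^'m::finite \<Rightarrow> bool" where
  "white u \<longleftrightarrow> odd (\<Sum>k\<in>UNIV. u $ k)"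

definition closed_on :: "(int^'m::finite \<Rightarrow> bool) \<Rightarrow> (int^'m \<Rightarrow> real^'n) \<Rightarrow> bool" where
  "closed_on col f \<longleftrightarrow> (\<forall>vs. vs \<noteq> [] \<longrightarrow> hd vs = last vs \<longrightarrow>
     (\<forall>v\<in>set vs. col v) \<longrightarrow>
     (\<forall>k. Suc k < length vs \<longrightarrow> diag_edge (vs ! k) (vs ! Suc k)) \<longrightarrow>
     prod_list (map (\<lambda>(a, b). qform f a b) (zip vs (tl vs))) = 1)"

end

theory Submission
  imports Defs
begin


lemma ue_nth: "ue i $ k = (if k = i then 1 else 0)"
  by (simp add: ue_def axis_def)

definition cs :: "int^'m::finite \<Rightarrow> int" where "cs x = (\<Sum>k\<in>UNIV. x $ k)"

lemma cs_add: "cs (x + y) = cs x + cs y" by (simp add: cs_def sum.distrib)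
lemma cs_diff: "cs (x - y) = cs x - cs y" by (simp add: cs_def sum_subtractf)
lemma cs_ue: "cs (ue i) = 1" by (simp add: cs_def ue_nth)

lemma black_cs: "black x \<longleftrightarrow> even (cs x)" by (simp add: black_def cs_def)
lemma white_cs: "white x \<longleftrightarrow> odd (cs x)" by (simp add: white_def cs_def)

lemma ue_sum_eq:
  assumes "ue i + ue j = ue k + ue l" "i \<noteq> j" "k \<noteq> l"
  shows "(i = k \<and> j = l) \<or> (i = l \<and> j = k)"
proof -
  have "\<And>t. (ue i + ue j) $ t = (ue k + ue l) $ t" using assms by simp
  hence h: "\<And>t. (if t = i then 1 else 0) + (if t = j then 1 else 0) = (if t = k then 1 else 0) + (if t = l then (1::int) else 0)"
    by (simp add: ue_nth)
  from h[of i] h[of j] h[of k] show ?thesis using assms(2,3) by (auto split: if_splits)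
qed

lemma ue_diff_eq:
  assumes "ue i - ue j = ue k - ue l" "i \<noteq> j" "k \<noteq> l"
  shows "i = k \<and> j = l"
proof -
  have "\<And>t. (ue i - ue j) $ t = (ue k - ue l) $ t" using assms by simp
  hence h: "\<And>t. (if t = i then 1 else 0) - (if t = j then 1 else 0) = (if t = k then 1 else 0) - (if t = l then (1::int) else 0)"
    by (simp add: ue_nth)
  from h[of i] h[of j] h[of k] show ?thesis using assms(2,3) by (auto split: if_splits)
qed


lemma int_pot_add:
  fixes \<phi> :: "int \<Rightarrow> 'a::ab_group_add"
  shows "\<exists>T. T 0 = 0 \<and> (\<forall>n. T (n+1) = T n + \<phi> n)"
proof -
  define T where "T n = (if 0 \<le> n then (\<Sum>s<nat n. \<phi> (int s)) else - (\<Sum>s<nat (-n). \<phi> (- int s - 1)))" for n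
  have "T (n+1) = T n + \<phi> n" for n
  proof (cases "0 \<le> n")
    case True
    then have "nat (n+1) = Suc (nat n)" by simp
    then show ?thesis using True by (simp add: T_def)
  next
    case False
    show ?thesis
    proof (cases "n = -1")
      case True then show ?thesis by (simp add: T_def)
    next
      case False2: False
      have e: "nat (-n) = Suc (nat (-n-1))" using False False2 by simp
      have e2: "- int (nat (-n-1)) - 1 = n" using False by simp
      have e3: "nat (- 1 - n) = nat (-n - 1)" by simp
      show ?thesis using False False2 by (simp add: T_def e e2 e3 algebra_simps)
    qed
  qed
  moreover have "T 0 = 0" by (simp add: T_def)
  ultimately show ?thesis by blast
qed

lemma int_pot_mult:
  fixes \<phi> :: "int \<Rightarrow> 'a::field"
  assumes "\<And>n. \<phi> n \<noteq> 0"
  shows "\<exists>T. T 0 = 1 \<and> (\<forall>n. T n \<noteq> 0) \<and> (\<forall>n. T (n+1) = T n * \<phi> n)"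
proof -
  define T where "T n = (if 0 \<le> n then (\<Prod>s<nat n. \<phi> (int s)) else inverse (\<Prod>s<nat (-n). \<phi> (- int s - 1)))" for n
  have "T (n+1) = T n * \<phi> n" for n
  proof (cases "0 \<le> n")
    case True
    then have "nat (n+1) = Suc (nat n)" by simp
    then show ?thesis using True by (simp add: T_def)
  next
    case False
    show ?thesis
    proof (cases "n = -1")
      case True then show ?thesis using assms by (simp add: T_def)
    next
      case False2: False
      have e: "nat (-n) = Suc (nat (-n-1))" using False False2 by simp
      have e2: "- int (nat (-n-1)) - 1 = n" using False by simp
      have nz: "(\<Prod>s<nat (-n-1). \<phi> (- int s - 1)) \<noteq> 0" using assms by (simp add: prod_zero_iff)
      have e3: "nat (- 1 - n) = nat (-n - 1)" by simp
      show ?thesis using False False2 assms[of n] nz by (simp add: T_def e e2 e3 field_simps)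
    qed
  qed
  moreover have "T 0 = 1" by (simp add: T_def)
  moreover have "T n \<noteq> 0" for n using assms by (simp add: T_def prod_zero_iff)
  ultimately show ?thesis by blast
qed

lemma int_fun_eq_add:
  fixes h1 h2 :: "int \<Rightarrow> 'a::ab_group_add"
  assumes "h1 0 = h2 0" "\<And>n. h1 (n+1) - h1 n = h2 (n+1) - h2 n"
  shows "h1 n = h2 n"
proof (induction n rule: int_induct[where k=0])
  case base then show ?case using assms(1) .
next
  case (step1 i)
  have "h1 (i+1) = (h2 (i+1) - h2 i) + h1 i" using assms(2)[of i] by (metis diff_add_cancel)
  then show ?case using step1 by simp
next
  case (step2 i)
  have "h1 (i - 1) = h1 i - (h2 i - h2 (i - 1))" using assms(2)[of "i-1"] by (simp add: algebra_simps)
  then show ?case using step2 by simp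
qed

lemma int_fun_eq_mult:
  fixes h1 h2 :: "int \<Rightarrow> 'a::field"
  assumes "h1 0 = h2 0" "\<And>n. h1 (n+1) = h1 n * c n" "\<And>n. h2 (n+1) = h2 n * c n" "\<And>n. c n \<noteq> 0"
  shows "h1 n = h2 n"
proof (induction n rule: int_induct[where k=0])
  case base then show ?case using assms(1) .
next
  case (step1 i) then show ?case using assms(2,3)[of i] by simp
next
  case (step2 i) then show ?case using assms(2,3)[of "i-1"] assms(4)[of "i-1"] by simp
qed


definition proj :: "'m set \<Rightarrow> int^'m::finite \<Rightarrow> int^'m" where
  "proj S x = (\<chi> k. if k \<in> S then x $ k else 0)"

lemma proj_nth: "proj S x $ k = (if k \<in> S then x $ k else 0)" by (simp add: proj_def)

lemma proj_UNIV: "proj UNIV x = x" by (simp add: vec_eq_iff proj_nth)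
lemma proj_ue_in: "j \<in> S \<Longrightarrow> proj S (x + ue j) = proj S x + ue j"
  by (auto simp add: vec_eq_iff proj_nth ue_nth)
lemma proj_ue_out: "j \<notin> S \<Longrightarrow> proj S (x + ue j) = proj S x"
  by (auto simp add: vec_eq_iff proj_nth ue_nth)
lemma proj_proj: "S \<subseteq> T \<Longrightarrow> proj S (proj T x) = proj S x"
  by (auto simp add: vec_eq_iff proj_nth)
lemma proj_insert: "k \<notin> S \<Longrightarrow> proj (insert k S) x = proj S x + axis k (x $ k)"
  by (auto simp add: vec_eq_iff proj_nth axis_def)
lemma axis_zero0: "axis k (0::int) = 0" by (simp add: vec_eq_iff axis_def)
lemma axis_succ: "axis k (n + 1) = axis k n + ue k"
  by (auto simp add: vec_eq_iff axis_def ue_nth)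

lemma zm_pot_add:
  fixes \<omega> :: "int^'m::finite \<Rightarrow> 'm \<Rightarrow> 'a::ab_group_add"
  assumes sq: "\<And>x i j. \<omega> x i + \<omega> (x + ue i) j = \<omega> x j + \<omega> (x + ue j) i"
  shows "\<exists>F. \<forall>x k. F (x + ue k) = F x + \<omega> x k"
proof -
  have "\<exists>G. (\<forall>x. G x = G (proj S x)) \<and> (\<forall>x j. j \<in> S \<longrightarrow> G (x + ue j) = G x + \<omega> (proj S x) j)"
    if "finite S" for S
    using that
  proof (induction S rule: finite_induct)
    case empty
    show ?case by (rule exI[of _ "\<lambda>x. 0"]) simp
  next
    case (insert k S)
    obtain G where G1: "\<And>x. G x = G (proj S x)"
      and G2: "\<And>x j. j \<in> S \<Longrightarrow> G (x + ue j) = G x + \<omega> (proj S x) j" using insert.IH by blast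
    have "\<forall>y. \<exists>T. T 0 = 0 \<and> (\<forall>n. T (n+1) = T n + \<omega> (y + axis k n) k)"
      by (intro allI int_pot_add)
    then obtain T where T0: "\<And>y. T y 0 = 0" and T1: "\<And>y n. T y (n+1) = T y n + \<omega> (y + axis k n) k"
      by metis
    have Tj: "T (y + ue j) n = T y n + \<omega> (y + axis k n) j - \<omega> y j" for y j n
    proof (rule int_fun_eq_add[of "T (y + ue j)" "\<lambda>n. T y n + \<omega> (y + axis k n) j - \<omega> y j"])
      show "T (y + ue j) 0 = T y 0 + \<omega> (y + axis k 0) j - \<omega> y j" by (simp add: T0 axis_zero0)
    next
      fix n
      have s: "\<omega> (y + axis k n) k + \<omega> (y + axis k n + ue k) j = \<omega> (y + axis k n) j + \<omega> (y + axis k n + ue j) k"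
        by (rule sq)
      have a1: "y + axis k n + ue k = y + axis k (n+1)" by (simp add: axis_succ add.assoc)
      have a2: "y + axis k n + ue j = y + ue j + axis k n" by (simp add: add_ac)
      show "T (y + ue j) (n + 1) - T (y + ue j) n =
         T y (n + 1) + \<omega> (y + axis k (n + 1)) j - \<omega> y j - (T y n + \<omega> (y + axis k n) j - \<omega> y j)"
        using s unfolding a1 a2 T1 by (simp add: algebra_simps)
    qed
    define G' where "G' x = G x + T (proj S x) (x $ k)" for x
    have ks: "S \<subseteq> insert k S" by auto
    have "G' x = G' (proj (insert k S) x)" for x
      unfolding G'_def using G1[of x] G1[of "proj (insert k S) x"] by (simp add: proj_proj[OF ks] proj_nth)
    moreover have "G' (x + ue j) = G' x + \<omega> (proj (insert k S) x) j" if "j \<in> insert k S" for x j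
    proof (cases "j = k")
      case True
      have "G (x + ue k) = G x" using G1[of "x + ue k"] G1[of x] proj_ue_out[OF insert.hyps(2)] by simp
      then show ?thesis using True T1[of "proj S x" "x $ k"]
        by (simp add: G'_def proj_ue_out[OF insert.hyps(2)] T1 proj_insert[OF insert.hyps(2)] ue_nth algebra_simps)
    next
      case False
      then have jS: "j \<in> S" using that by simp
      have xk: "(x + ue j) $ k = x $ k" using False by (simp add: ue_nth)
      have "G' (x + ue j) = G (x + ue j) + T (proj S x + ue j) (x $ k)"
        unfolding G'_def proj_ue_in[OF jS] xk ..
      also have "\<dots> = G x + \<omega> (proj S x) j + (T (proj S x) (x $ k) + \<omega> (proj S x + axis k (x $ k)) j - \<omega> (proj S x) j)"
        unfolding G2[OF jS] Tj ..
      also have "\<dots> = G' x + \<omega> (proj (insert k S) x) j"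
        unfolding G'_def proj_insert[OF insert.hyps(2)] by (simp add: algebra_simps)
      finally show ?thesis .
    qed
    ultimately show ?case by blast
  qed
  from this[of UNIV] show ?thesis by (auto simp: proj_UNIV)
qed


lemma zm_pot_mult:
  fixes \<omega> :: "int^'m::finite \<Rightarrow> 'm \<Rightarrow> 'a::field"
  assumes nz: "\<And>x i. \<omega> x i \<noteq> 0"
  assumes sq: "\<And>x i j. \<omega> x i * \<omega> (x + ue i) j = \<omega> x j * \<omega> (x + ue j) i"
  shows "\<exists>F. (\<forall>x. F x \<noteq> 0) \<and> (\<forall>x k. F (x + ue k) = F x * \<omega> x k)"
proof -
  have "\<exists>G. (\<forall>x. G x \<noteq> 0) \<and> (\<forall>x. G x = G (proj S x)) \<and> (\<forall>x j. j \<in> S \<longrightarrow> G (x + ue j) = G x * \<omega> (proj S x) j)"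
    if "finite S" for S
    using that
  proof (induction S rule: finite_induct)
    case empty
    show ?case by (rule exI[of _ "\<lambda>x. 1"]) simp
  next
    case (insert k S)
    obtain G where G0: "\<And>x. G x \<noteq> 0" and G1: "\<And>x. G x = G (proj S x)"
      and G2: "\<And>x j. j \<in> S \<Longrightarrow> G (x + ue j) = G x * \<omega> (proj S x) j" using insert.IH by blast
    have "\<forall>y. \<exists>T. T 0 = 1 \<and> (\<forall>n. T n \<noteq> 0) \<and> (\<forall>n. T (n+1) = T n * \<omega> (y + axis k n) k)"
      by (intro allI int_pot_mult nz)
    then obtain T where T0: "\<And>y. T y 0 = 1" and Tnz: "\<And>y n. T y n \<noteq> 0"
      and T1: "\<And>y n. T y (n+1) = T y n * \<omega> (y + axis k n) k"
      by metis
    have Tj: "T (y + ue j) n = T y n * \<omega> (y + axis k n) j / \<omega> y j" for y j n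
    proof (rule int_fun_eq_mult[of "T (y + ue j)" "\<lambda>n. T y n * \<omega> (y + axis k n) j / \<omega> y j" "\<lambda>n. \<omega> (y + ue j + axis k n) k"])
      show "T (y + ue j) 0 = T y 0 * \<omega> (y + axis k 0) j / \<omega> y j" using nz by (simp add: T0 axis_zero0)
    next
      fix n
      show "T (y + ue j) (n + 1) = T (y + ue j) n * \<omega> (y + ue j + axis k n) k" by (rule T1)
    next
      fix n
      have s: "\<omega> (y + axis k n) k * \<omega> (y + axis k n + ue k) j = \<omega> (y + axis k n) j * \<omega> (y + axis k n + ue j) k"
        by (rule sq)
      have a1: "y + axis k n + ue k = y + axis k (n+1)" by (simp add: axis_succ add.assoc)
      have a2: "y + axis k n + ue j = y + ue j + axis k n" by (simp add: add_ac)
      show "T y (n + 1) * \<omega> (y + axis k (n + 1)) j / \<omega> y j =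
         T y n * \<omega> (y + axis k n) j / \<omega> y j * \<omega> (y + ue j + axis k n) k"
        using s unfolding a1 a2 T1 by (simp add: algebra_simps)
    next
      fix n show "\<omega> (y + ue j + axis k n) k \<noteq> 0" by (rule nz)
    qed
    define G' where "G' x = G x * T (proj S x) (x $ k)" for x
    have ks: "S \<subseteq> insert k S" by auto
    have "G' x \<noteq> 0" for x unfolding G'_def using G0 Tnz by simp
    moreover have "G' x = G' (proj (insert k S) x)" for x
      unfolding G'_def using G1[of x] G1[of "proj (insert k S) x"] by (simp add: proj_proj[OF ks] proj_nth)
    moreover have "G' (x + ue j) = G' x * \<omega> (proj (insert k S) x) j" if "j \<in> insert k S" for x j
    proof (cases "j = k")
      case True
      have "G (x + ue k) = G x" using G1[of "x + ue k"] G1[of x] proj_ue_out[OF insert.hyps(2)] by simp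
      then show ?thesis using True T1[of "proj S x" "x $ k"]
        by (simp add: G'_def proj_ue_out[OF insert.hyps(2)] T1 proj_insert[OF insert.hyps(2)] ue_nth algebra_simps)
    next
      case False
      then have jS: "j \<in> S" using that by simp
      have xk: "(x + ue j) $ k = x $ k" using False by (simp add: ue_nth)
      have "G' (x + ue j) = G (x + ue j) * T (proj S x + ue j) (x $ k)"
        unfolding G'_def proj_ue_in[OF jS] xk ..
      also have "\<dots> = G x * \<omega> (proj S x) j * (T (proj S x) (x $ k) * \<omega> (proj S x + axis k (x $ k)) j / \<omega> (proj S x) j)"
        unfolding G2[OF jS] Tj ..
      also have "\<dots> = G' x * \<omega> (proj (insert k S) x) j"
        unfolding G'_def proj_insert[OF insert.hyps(2)] using nz by (simp add: field_simps)
      finally show ?thesis .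
    qed
    ultimately show ?case by blast
  qed
  from this[of UNIV] show ?thesis by (auto simp: proj_UNIV)
qed


definition indep :: "real^'n \<Rightarrow> real^'n \<Rightarrow> bool" where
  "indep d1 d2 \<longleftrightarrow> (\<forall>\<alpha> \<beta>. \<alpha> *\<^sub>R d1 + \<beta> *\<^sub>R d2 = 0 \<longrightarrow> \<alpha> = 0 \<and> \<beta> = 0)"

definition qrep :: "real^'n \<Rightarrow> real^'n \<Rightarrow> real^'n \<Rightarrow> real^'n \<Rightarrow> real^'n \<Rightarrow> real \<Rightarrow> real \<Rightarrow> bool" where
  "qrep A B C D M r1 r2 \<longleftrightarrow> indep (A - M) (B - M) \<and> C - M = r1 *\<^sub>R (A - M) \<and> D - M = r2 *\<^sub>R (B - M)
     \<and> r1 \<noteq> 0 \<and> r1 \<noteq> 1 \<and> r2 \<noteq> 0 \<and> r2 \<noteq> 1"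

lemma indep_coord:
  assumes "indep d1 d2"
  shows "a *\<^sub>R d1 + b *\<^sub>R d2 = a' *\<^sub>R d1 + b' *\<^sub>R d2 \<longleftrightarrow> a = a' \<and> b = b'"
proof
  assume "a *\<^sub>R d1 + b *\<^sub>R d2 = a' *\<^sub>R d1 + b' *\<^sub>R d2"
  then have "(a - a') *\<^sub>R d1 + (b - b') *\<^sub>R d2 = 0" by (simp add: algebra_simps)
  then show "a = a' \<and> b = b'" using assms unfolding indep_def by fastforce
qed simp

lemma coll_param:
  assumes "\<forall>x\<in>S. \<exists>t. x = M + t *\<^sub>R v"
  shows "collinear S"
  unfolding collinear_def
proof (intro exI[of _ v] ballI)
  fix x y assume "x \<in> S" "y \<in> S"
  then obtain tx ty where "x = M + tx *\<^sub>R v" "y = M + ty *\<^sub>R v" using assms by blast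
  then show "\<exists>c. x - y = c *\<^sub>R v" by (intro exI[of _ "tx - ty"]) (simp add: algebra_simps)
qed

lemma on_line:
  fixes P Q M :: "real^'n"
  assumes "Q - M = r *\<^sub>R (P - M)" "r \<noteq> 1"
  shows "M \<in> line_thr P Q"
proof -
  have "M = (- r / (1 - r)) *\<^sub>R P + (1 / (1 - r)) *\<^sub>R Q"
  proof -
    have Q: "Q = M + r *\<^sub>R (P - M)" using assms(1) by (simp add: algebra_simps)
    have "(1 - r) *\<^sub>R M = (- r) *\<^sub>R P + Q" unfolding Q by (simp add: algebra_simps)
    then have "M = (1 / (1 - r)) *\<^sub>R ((- r) *\<^sub>R P + Q)" using assms(2)
      by (metis divide_self_if eq_iff_diff_eq_0 right_minus_eq scaleR_collapse scaleR_one scaleR_scaleR times_divide_eq_left divide_inverse_commute mult.commute)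
    then show ?thesis by (simp add: algebra_simps)
  qed
  moreover have "- r / (1 - r) + 1 / (1 - r) = 1" using assms(2) by (simp add: field_simps)
  ultimately show ?thesis unfolding line_thr_def affine_hull_2 by blast
qed

lemma on_line_param:
  fixes P Q M :: "real^'n"
  assumes "X \<in> line_thr P Q" "Q - M = r *\<^sub>R (P - M)"
  shows "\<exists>s. X = M + s *\<^sub>R (P - M)"
proof -
  obtain u v where X: "X = u *\<^sub>R P + v *\<^sub>R Q" "u + v = 1" using assms(1) unfolding line_thr_def affine_hull_2 by blast
  have Q: "Q = M + r *\<^sub>R (P - M)" using assms(2) by (simp add: algebra_simps)
  have "X = M + (u + v * r) *\<^sub>R (P - M)"
    unfolding X(1) Q using X(2) by (simp add: algebra_simps) (metis add.commute scaleR_add_left scaleR_one add.left_commute)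
  then show ?thesis by blast
qed

lemma sratio_eq:
  fixes P Q M :: "real^'n"
  assumes "P - M = t *\<^sub>R (Q - M)" "Q \<noteq> M"
  shows "sratio M P Q = t"
  unfolding sratio_def
proof (rule the_equality)
  show "P - M = t *\<^sub>R (Q - M)" by fact
next
  fix t' assume "P - M = t' *\<^sub>R (Q - M)"
  then have "(t' - t) *\<^sub>R (Q - M) = 0" using assms(1) by (simp add: algebra_simps)
  then show "t' = t" using assms(2) by simp
qed


lemma line_param_rep:
  fixes A C M :: "real^'n"
  assumes "M \<in> line_thr A C" "M \<noteq> A" "M \<noteq> C"
  shows "\<exists>r. C - M = r *\<^sub>R (A - M) \<and> r \<noteq> 0 \<and> r \<noteq> 1"
proof -
  obtain u v where M: "M = u *\<^sub>R A + v *\<^sub>R C" "u + v = 1" using assms(1) unfolding line_thr_def affine_hull_2 by blast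
  then have v: "v = 1 - u" by simp
  have u1: "u \<noteq> 1" using assms(2) M v by auto
  have u0: "u \<noteq> 0" using assms(3) M v by auto
  have AM: "A - M = (1 - u) *\<^sub>R (A - C)" unfolding M(1) v by (simp add: algebra_simps)
  have CM: "C - M = u *\<^sub>R (C - A)" unfolding M(1) v by (simp add: algebra_simps)
  have cc: "(- u / (1 - u)) * (1 - u) = - u" using u1 by (simp add: field_simps)
  have "(- u / (1 - u)) *\<^sub>R (A - M) = ((- u / (1 - u)) * (1 - u)) *\<^sub>R (A - C)" unfolding AM by simp
  also have "\<dots> = C - M" unfolding cc CM by (simp add: algebra_simps)
  finally have "C - M = (- u / (1 - u)) *\<^sub>R (A - M)" ..
  moreover have "- u / (1 - u) \<noteq> 0" using u0 u1 by simp
  moreover have "- u / (1 - u) \<noteq> 1" using u1 by (simp add: field_simps)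
  ultimately show ?thesis by blast
qed



lemma nondeg_qrep:
  fixes A B C D :: "real^'n"
  assumes "nondeg_planar_quad A B C D"
  shows "\<exists>M r1 r2. qrep A B C D M r1 r2"
proof -
  obtain M where M1: "M \<in> line_thr A C" and M2: "M \<in> line_thr B D" and Mn: "M \<notin> {A, B, C, D}"
    using assms unfolding nondeg_planar_quad_def by blast
  obtain r1 where r1: "C - M = r1 *\<^sub>R (A - M)" "r1 \<noteq> 0" "r1 \<noteq> 1" using line_param_rep[OF M1] Mn by auto
  obtain r2 where r2: "D - M = r2 *\<^sub>R (B - M)" "r2 \<noteq> 0" "r2 \<noteq> 1" using line_param_rep[OF M2] Mn by auto
  have nc: "\<not> collinear {A, B, C}" using assms unfolding nondeg_planar_quad_def by blast
  have "indep (A - M) (B - M)"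
    unfolding indep_def
  proof (intro allI impI)
    fix \<alpha> \<beta> assume h: "\<alpha> *\<^sub>R (A - M) + \<beta> *\<^sub>R (B - M) = 0"
    show "\<alpha> = 0 \<and> \<beta> = 0"
    proof (rule ccontr)
      assume nz: "\<not> (\<alpha> = 0 \<and> \<beta> = 0)"
      show False
      proof (cases "\<alpha> = 0")
        case True
        then have "\<beta> \<noteq> 0" using nz by simp
        then have "B = M" using h True by simp
        then show False using Mn by simp
      next
        case False
        define \<gamma> where "\<gamma> = - \<beta> / \<alpha>"
        have "A - M = \<gamma> *\<^sub>R (B - M)"
        proof -
          have "\<alpha> *\<^sub>R (A - M) = (- \<beta>) *\<^sub>R (B - M)" using h by (simp add: algebra_simps eq_neg_iff_add_eq_0)
          then have "(1/\<alpha>) *\<^sub>R (\<alpha> *\<^sub>R (A - M)) = (1/\<alpha>) *\<^sub>R ((- \<beta>) *\<^sub>R (B - M))" by simp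
          then show ?thesis using False by (simp add: \<gamma>_def)
        qed
        then have "\<forall>x\<in>{A, B, C}. \<exists>t. x = M + t *\<^sub>R (B - M)"
          using r1(1)
          apply (auto)
            apply (rule exI[of _ \<gamma>]; simp add: algebra_simps)
           apply (rule exI[of _ 1]; simp)
          apply (rule exI[of _ "r1 * \<gamma>"])
          by (metis add.commute diff_add_cancel scaleR_scaleR)
        then show False using coll_param nc by blast
      qed
    qed
  qed
  then show ?thesis unfolding qrep_def using r1 r2 by blast
qed



lemma qrep_diag_int:
  fixes A B C D :: "real^'n"
  assumes "qrep A B C D M r1 r2"
  shows "diag_int A B C D = M"
  unfolding diag_int_def
proof (rule the_equality)
  show "M \<in> line_thr A C \<and> M \<in> line_thr B D"
    using assms unfolding qrep_def by (auto intro: on_line)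
next
  fix X assume "X \<in> line_thr A C \<and> X \<in> line_thr B D"
  then obtain s t where "X = M + s *\<^sub>R (A - M)" "X = M + t *\<^sub>R (B - M)"
    using on_line_param assms unfolding qrep_def by meson
  then have "s *\<^sub>R (A - M) + (- t) *\<^sub>R (B - M) = 0" by (simp add: algebra_simps)
  then have "s = 0" using assms unfolding qrep_def indep_def by blast
  then show "X = M" using \<open>X = M + s *\<^sub>R (A - M)\<close> by simp
qed

lemma noncoll_det:
  fixes P Q R :: "real^'n"
  assumes "indep d1 d2" "P = R + a1 *\<^sub>R d1 + b1 *\<^sub>R d2" "Q = R + a2 *\<^sub>R d1 + b2 *\<^sub>R d2"
    "a1 * b2 - a2 * b1 \<noteq> 0"
  shows "\<not> collinear {P, Q, R}"
proof
  assume "collinear {P, Q, R}"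
  then obtain u where u: "\<forall>x\<in>{P,Q,R}. \<forall>y\<in>{P,Q,R}. \<exists>c. x - y = c *\<^sub>R u" unfolding collinear_def by blast
  obtain c1 where c1: "P - R = c1 *\<^sub>R u" using u by blast
  obtain c2 where c2: "Q - R = c2 *\<^sub>R u" using u by blast
  have "c2 *\<^sub>R (P - R) - c1 *\<^sub>R (Q - R) = 0" unfolding c1 c2 by (simp add: algebra_simps)
  then have "(c2 * a1 - c1 * a2) *\<^sub>R d1 + (c2 * b1 - c1 * b2) *\<^sub>R d2 = 0"
    unfolding assms(2,3) by (simp add: algebra_simps)
  then have "c2 * a1 - c1 * a2 = 0 \<and> c2 * b1 - c1 * b2 = 0" using assms(1) unfolding indep_def by blast
  then have e1: "c2 * a1 = c1 * a2" and e2: "c2 * b1 = c1 * b2" by simp_all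
  show False
  proof (cases "c1 = 0 \<and> c2 = 0")
    case True
    then have "a1 *\<^sub>R d1 + b1 *\<^sub>R d2 = 0" using c1 assms(2) by (simp add: algebra_simps)
    then have "a1 = 0" "b1 = 0" using assms(1) unfolding indep_def by blast+
    then show False using assms(4) by simp
  next
    case False
    have "c1 * (a1 * b2 - a2 * b1) = a1 * (c1 * b2) - b1 * (c1 * a2)" by (simp add: algebra_simps)
    also have "\<dots> = 0" unfolding e1[symmetric] e2[symmetric] by (simp add: algebra_simps)
    finally have "c1 * (a1 * b2 - a2 * b1) = 0" .
    moreover have "c2 * (a1 * b2 - a2 * b1) = b2 * (c2 * a1) - a2 * (c2 * b1)" by (simp add: algebra_simps)
    moreover have "b2 * (c2 * a1) - a2 * (c2 * b1) = 0" unfolding e1 e2 by (simp add: algebra_simps)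
    ultimately show False using False assms(4) by simp
  qed
qed


lemma qrep_nondeg:
  fixes A B C D :: "real^'n"
  assumes q: "qrep A B C D M r1 r2"
  shows "nondeg_planar_quad A B C D"
proof -
  define d1 where "d1 = A - M"
  define d2 where "d2 = B - M"
  have ind: "indep d1 d2" using q unfolding qrep_def d1_def d2_def by blast
  have r: "r1 \<noteq> 0" "r1 \<noteq> 1" "r2 \<noteq> 0" "r2 \<noteq> 1" using q unfolding qrep_def by auto
  have pA: "A = M + 1 *\<^sub>R d1 + 0 *\<^sub>R d2" unfolding d1_def by simp
  have pB: "B = M + 0 *\<^sub>R d1 + 1 *\<^sub>R d2" unfolding d2_def by simp
  have pC: "C = M + r1 *\<^sub>R d1 + 0 *\<^sub>R d2" using q unfolding qrep_def d1_def by (simp add: algebra_simps)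
  have pD: "D = M + 0 *\<^sub>R d1 + r2 *\<^sub>R d2" using q unfolding qrep_def d2_def by (simp add: algebra_simps)
  have pM: "M = M + 0 *\<^sub>R d1 + 0 *\<^sub>R d2" by simp
  have ceq: "M + a *\<^sub>R d1 + b *\<^sub>R d2 = M + a' *\<^sub>R d1 + b' *\<^sub>R d2 \<longleftrightarrow> a = a' \<and> b = b'" for a b a' b'
    using indep_coord[OF ind, of a b a' b'] by (simp add: add.assoc)
  have cop: "coplanar {A, B, C, D}"
    unfolding coplanar_def
  proof (rule exI[of _ M], rule exI[of _ A], rule exI[of _ B])
    have "A \<in> affine hull {M, A, B}" "B \<in> affine hull {M, A, B}" by (auto intro: hull_inc)
    moreover have "C \<in> affine hull {M, A, B}" unfolding affine_hull_3
      apply (rule CollectI, rule exI[of _ "1 - r1"], rule exI[of _ r1], rule exI[of _ 0])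
      using q unfolding qrep_def by (simp add: algebra_simps)
    moreover have "D \<in> affine hull {M, A, B}" unfolding affine_hull_3
      apply (rule CollectI, rule exI[of _ "1 - r2"], rule exI[of _ 0], rule exI[of _ r2])
      using q unfolding qrep_def by (simp add: algebra_simps)
    ultimately show "{A, B, C, D} \<subseteq> affine hull {M, A, B}" by auto
  qed
  define cf where "cf a b = M + a *\<^sub>R d1 + b *\<^sub>R d2" for a b
  have cfe: "cf a b = cf a' b' \<longleftrightarrow> a = a' \<and> b = b'" for a b a' b' unfolding cf_def by (rule ceq)
  have cA: "A = cf 1 0" "B = cf 0 1" "C = cf r1 0" "D = cf 0 r2" "M = cf 0 0"
    unfolding cf_def using pA pB pC pD by simp_all
  have dist: "distinct [A, B, C, D]"
    using r unfolding cA by (simp add: cfe)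
  have n1: "\<not> collinear {A, B, C}"
    by (rule noncoll_det[OF ind, of A C "1 - r1" 0 B "-r1" 1]) (use pA pB pC r in \<open>auto simp: algebra_simps\<close>)
  have n2: "\<not> collinear {A, B, D}"
    by (rule noncoll_det[OF ind, of A D 1 "-r2" B 0 "1 - r2"]) (use pA pB pD r in \<open>auto simp: algebra_simps\<close>)
  have n3: "\<not> collinear {A, C, D}"
    by (rule noncoll_det[OF ind, of A D 1 "-r2" C r1 "-r2"]) (use pA pC pD r in \<open>auto simp: algebra_simps\<close>)
  have n4: "\<not> collinear {B, C, D}"
    by (rule noncoll_det[OF ind, of B D 0 "1-r2" C r1 "-r2"]) (use pB pC pD r in \<open>auto simp: algebra_simps\<close>)
  have Mex: "M \<in> line_thr A C \<and> M \<in> line_thr B D \<and> M \<notin> {A, B, C, D}"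
  proof (intro conjI)
    show "M \<in> line_thr A C" using q unfolding qrep_def by (auto intro: on_line)
    show "M \<in> line_thr B D" using q unfolding qrep_def by (auto intro: on_line)
    show "M \<notin> {A, B, C, D}"
      using r unfolding cA by (simp add: cfe)
  qed
  show ?thesis unfolding nondeg_planar_quad_def using cop dist n1 n2 n3 n4 Mex by blast
qed


lemma sqM_sym: "sqM f u j i = sqM f u i j"
  unfolding sqM_def diag_int_def line_thr_def by (simp add: add_ac insert_commute conj_commute)

lemma cs_ue2: "cs (u + ue i + ue j) = cs u + 2" by (simp add: cs_add cs_ue)
lemma cs_ue1: "cs (u + ue i) = cs u + 1" by (simp add: cs_add cs_ue)

lemma black_witness:
  fixes u u' :: "int^'m::finite"
  assumes "i \<noteq> j" "i' \<noteq> j'" "{a, b} = {u, u + ue i + ue j}"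
    "{a, b} = {u', u' + ue i' + ue j'} \<or> {a, b} = {u' + ue i', u' + ue j'}"
  shows "u' = u \<and> ((i' = i \<and> j' = j) \<or> (i' = j \<and> j' = i))"
proof -
  from assms(3,4) have "{u, u + ue i + ue j} = {u', u' + ue i' + ue j'} \<or> {u, u + ue i + ue j} = {u' + ue i', u' + ue j'}" by simp
  then show ?thesis
  proof
    assume h: "{u, u + ue i + ue j} = {u', u' + ue i' + ue j'}"
    then consider "u = u'" "u + ue i + ue j = u' + ue i' + ue j'" | "u = u' + ue i' + ue j'" "u + ue i + ue j = u'"
      by (auto simp: doubleton_eq_iff)
    then show ?thesis
    proof cases
      case 1
      then have "ue i + ue j = ue i' + ue j'" by (simp add: add.assoc)
      then show ?thesis using ue_sum_eq[OF _ assms(1,2)] 1 by blast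
    next
      case 2
      then have "cs u = cs u' + 2" "cs u + 2 = cs u'" using cs_ue2 by metis+
      then show ?thesis by simp
    qed
  next
    assume h: "{u, u + ue i + ue j} = {u' + ue i', u' + ue j'}"
    then consider "u = u' + ue i'" "u + ue i + ue j = u' + ue j'" | "u = u' + ue j'" "u + ue i + ue j = u' + ue i'"
      by (auto simp: doubleton_eq_iff)
    then show ?thesis
    proof cases
      case 1
      then have "cs u = cs u' + 1" "cs u + 2 = cs u' + 1" using cs_ue2 cs_ue1 by metis+
      then show ?thesis by simp
    next
      case 2
      then have "cs u = cs u' + 1" "cs u + 2 = cs u' + 1" using cs_ue2 cs_ue1 by metis+
      then show ?thesis by simp
    qed
  qed
qed

lemma white_witness:
  fixes u u' :: "int^'m::finite"
  assumes "i \<noteq> j" "i' \<noteq> j'" "{a, b} = {u + ue i, u + ue j}"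
    "{a, b} = {u', u' + ue i' + ue j'} \<or> {a, b} = {u' + ue i', u' + ue j'}"
  shows "u' = u \<and> ((i' = i \<and> j' = j) \<or> (i' = j \<and> j' = i))"
proof -
  from assms(3,4) have "{u + ue i, u + ue j} = {u', u' + ue i' + ue j'} \<or> {u + ue i, u + ue j} = {u' + ue i', u' + ue j'}" by simp
  then show ?thesis
  proof
    assume h: "{u + ue i, u + ue j} = {u', u' + ue i' + ue j'}"
    then consider "u + ue i = u'" "u + ue j = u' + ue i' + ue j'" | "u + ue i = u' + ue i' + ue j'" "u + ue j = u'"
      by (auto simp: doubleton_eq_iff)
    then show ?thesis
    proof cases
      case 1
      then have "cs u + 1 = cs u'" "cs u + 1 = cs u' + 2" using cs_ue2 cs_ue1 by metis+
      then show ?thesis by simp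
    next
      case 2
      then have "cs u + 1 = cs u' + 2" "cs u + 1 = cs u'" using cs_ue2 cs_ue1 by metis+
      then show ?thesis by simp
    qed
  next
    assume h: "{u + ue i, u + ue j} = {u' + ue i', u' + ue j'}"
    then consider "u + ue i = u' + ue i'" "u + ue j = u' + ue j'" | "u + ue i = u' + ue j'" "u + ue j = u' + ue i'"
      by (auto simp: doubleton_eq_iff)
    then show ?thesis
    proof cases
      case 1
      have "ue i - ue j = (u + ue i) - (u + ue j)" by simp
      also have "\<dots> = ue i' - ue j'" unfolding 1 by simp
      finally have "i = i' \<and> j = j'" using ue_diff_eq assms(1,2) by blast
      moreover then have "u = u'" using 1 by simp
      ultimately show ?thesis by simp
    next
      case 2
      have "ue i - ue j = (u + ue i) - (u + ue j)" by simp
      also have "\<dots> = ue j' - ue i'" unfolding 2 by simp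
      finally have "i = j' \<and> j = i'" using ue_diff_eq assms(1,2) by blast
      moreover then have "u = u'" using 2 by simp
      ultimately show ?thesis by simp
    qed
  qed
qed

lemma qform_eq:
  fixes f :: "int^'m::finite \<Rightarrow> real^'n"
  assumes "i \<noteq> j" "{a, b} = {u, u + ue i + ue j} \<or> {a, b} = {u + ue i, u + ue j}"
  shows "qform f a b = sratio (sqM f u i j) (f b) (f a)"
  unfolding qform_def
proof (rule the_equality)
  show "\<exists>u' i' j'. i' \<noteq> j' \<and> ({a, b} = {u', u' + ue i' + ue j'} \<or> {a, b} = {u' + ue i', u' + ue j'}) \<and>
          sratio (sqM f u i j) (f b) (f a) = sratio (sqM f u' i' j') (f b) (f a)"
    using assms by blast
next
  fix x assume "\<exists>u' i' j'. i' \<noteq> j' \<and> ({a, b} = {u', u' + ue i' + ue j'} \<or> {a, b} = {u' + ue i', u' + ue j'}) \<and>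
          x = sratio (sqM f u' i' j') (f b) (f a)"
  then obtain u' i' j' where w: "i' \<noteq> j'" "{a, b} = {u', u' + ue i' + ue j'} \<or> {a, b} = {u' + ue i', u' + ue j'}"
    "x = sratio (sqM f u' i' j') (f b) (f a)" by blast
  have "u' = u \<and> ((i' = i \<and> j' = j) \<or> (i' = j \<and> j' = i))"
    using assms(2) black_witness[OF assms(1) w(1) _ w(2)] white_witness[OF assms(1) w(1) _ w(2)] by blast
  then have "sqM f u' i' j' = sqM f u i j" using sqM_sym by metis
  then show "x = sratio (sqM f u i j) (f b) (f a)" using w(3) by simp
qed


definition sq_r1 :: "(int^'m::finite \<Rightarrow> real^'n) \<Rightarrow> int^'m \<Rightarrow> 'm \<Rightarrow> 'm \<Rightarrow> real" where
  "sq_r1 f u i j = sratio (sqM f u i j) (f (u + ue i + ue j)) (f u)"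
definition sq_r2 :: "(int^'m::finite \<Rightarrow> real^'n) \<Rightarrow> int^'m \<Rightarrow> 'm \<Rightarrow> 'm \<Rightarrow> real" where
  "sq_r2 f u i j = sratio (sqM f u i j) (f (u + ue j)) (f (u + ue i))"

lemma sq_facts:
  fixes f :: "int^'m::finite \<Rightarrow> real^'n::finite"
  assumes "is_Qnet f" "i \<noteq> j"
  shows "qrep (f u) (f (u + ue i)) (f (u + ue i + ue j)) (f (u + ue j)) (sqM f u i j) (sq_r1 f u i j) (sq_r2 f u i j)"
    and "qform f u (u + ue i + ue j) = sq_r1 f u i j"
    and "qform f (u + ue i + ue j) u = 1 / sq_r1 f u i j"
    and "qform f (u + ue i) (u + ue j) = sq_r2 f u i j"
    and "qform f (u + ue j) (u + ue i) = 1 / sq_r2 f u i j"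
proof -
  let ?A = "f u" and ?B = "f (u + ue i)" and ?C = "f (u + ue i + ue j)" and ?D = "f (u + ue j)"
  have nd: "nondeg_planar_quad ?A ?B ?C ?D" using assms unfolding is_Qnet_def by blast
  obtain M r1 r2 where q: "qrep ?A ?B ?C ?D M r1 r2" using nondeg_qrep[OF nd] by blast
  have M: "sqM f u i j = M" unfolding sqM_def using qrep_diag_int[OF q] .
  have AM: "?A \<noteq> M" "?B \<noteq> M" using q unfolding qrep_def indep_def
    by (metis add.right_neutral scaleR_one scaleR_zero_left zero_neq_one right_minus_eq)+
  have e1: "?C - M = r1 *\<^sub>R (?A - M)" "?D - M = r2 *\<^sub>R (?B - M)" "r1 \<noteq> 0" "r2 \<noteq> 0"
    using q unfolding qrep_def by auto
  have CM: "?C \<noteq> M" "?D \<noteq> M" using e1 AM by auto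
  have e2: "?A - M = (1 / r1) *\<^sub>R (?C - M)" "?B - M = (1 / r2) *\<^sub>R (?D - M)"
    using e1 by simp_all
  have R1: "sq_r1 f u i j = r1" unfolding sq_r1_def M using sratio_eq[OF e1(1) AM(1)] .
  have R2: "sq_r2 f u i j = r2" unfolding sq_r2_def M using sratio_eq[OF e1(2) AM(2)] .
  show "qrep ?A ?B ?C ?D (sqM f u i j) (sq_r1 f u i j) (sq_r2 f u i j)" using q M R1 R2 by simp
  show "qform f u (u + ue i + ue j) = sq_r1 f u i j"
    using qform_eq[OF assms(2), of u "u + ue i + ue j" u f] by (simp add: sq_r1_def)
  show "qform f (u + ue i + ue j) u = 1 / sq_r1 f u i j"
    using qform_eq[OF assms(2), of "u + ue i + ue j" u u f] R1 M sratio_eq[OF e2(1) CM(1)] by (simp add: insert_commute)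
  show "qform f (u + ue i) (u + ue j) = sq_r2 f u i j"
    using qform_eq[OF assms(2), of "u + ue i" "u + ue j" u f] by (simp add: sq_r2_def)
  show "qform f (u + ue j) (u + ue i) = 1 / sq_r2 f u i j"
    using qform_eq[OF assms(2), of "u + ue j" "u + ue i" u f] R2 M sratio_eq[OF e2(2) CM(2)] by (simp add: insert_commute)
qed

definition SQ :: "(int^'m::finite \<Rightarrow> real^'n) \<Rightarrow> (int^'m \<Rightarrow> real) \<Rightarrow> bool" where
  "SQ f Q \<longleftrightarrow> (\<forall>x. Q x \<noteq> 0) \<and> (\<forall>u i j. i \<noteq> j \<longrightarrow>
      sq_r1 f u i j = Q u / Q (u + ue i + ue j) \<and> sq_r2 f u i j = Q (u + ue i) / Q (u + ue j))"

lemma qform_Q: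
  fixes f :: "int^'m::finite \<Rightarrow> real^'n::finite"
  assumes "is_Qnet f" "SQ f Q" "diag_edge x y"
  shows "qform f x y = Q x / Q y"
proof -
  obtain u i j where ij: "i \<noteq> j" and e: "{x, y} = {u, u + ue i + ue j} \<or> {x, y} = {u + ue i, u + ue j}"
    using assms(3) unfolding diag_edge_def by blast
  have nz: "\<And>x. Q x \<noteq> 0" and s: "sq_r1 f u i j = Q u / Q (u + ue i + ue j)" "sq_r2 f u i j = Q (u + ue i) / Q (u + ue j)"
    using assms(2) ij unfolding SQ_def by auto
  note F = sq_facts[OF assms(1) ij, of u]
  from e consider "x = u" "y = u + ue i + ue j" | "y = u" "x = u + ue i + ue j" | "x = u + ue i" "y = u + ue j"
    | "y = u + ue i" "x = u + ue j"
    by (auto simp: doubleton_eq_iff)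
  then show ?thesis
    by cases (use F s nz in auto)
qed

lemma nth_succ_iff: "(\<forall>k. Suc k < length vs \<longrightarrow> P (vs ! k) (vs ! Suc k)) \<longleftrightarrow> successively P vs"
proof (induction vs rule: induct_list012)
  case (3 x y xs)
  have "(\<forall>k. Suc k < length (x # y # xs) \<longrightarrow> P ((x # y # xs) ! k) ((x # y # xs) ! Suc k)) \<longleftrightarrow>
        P x y \<and> (\<forall>k. Suc k < length (y # xs) \<longrightarrow> P ((y # xs) ! k) ((y # xs) ! Suc k))"
    apply (rule iffI)
     apply (intro conjI allI impI)
      apply (erule allE[of _ 0], simp)
     apply (erule_tac x="Suc k" in allE, simp)
    apply (intro allI impI, rename_tac k)
    apply (case_tac k, auto)
    done
  then show ?case using 3 by simp
qed auto

lemma walk_prod: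
  assumes "successively E vs" "vs \<noteq> []" "\<And>a b. E a b \<Longrightarrow> g a b = Q a / Q b" "\<And>x. Q x \<noteq> (0::real)"
  shows "prod_list (map (\<lambda>(a, b). g a b) (zip vs (tl vs))) = Q (hd vs) / Q (last vs)"
  using assms(1,2)
proof (induction vs rule: induct_list012)
  case (3 x y xs)
  then show ?case using assms(3,4) by simp
qed (use assms(4) in auto)

lemma closed_from_Q:
  fixes f :: "int^'m::finite \<Rightarrow> real^'n::finite"
  assumes "is_Qnet f" "SQ f Q"
  shows "closed_on col f"
  unfolding closed_on_def
proof (intro allI impI)
  fix vs :: "(int^'m) list"
  assume h: "vs \<noteq> []" "hd vs = last vs" "\<forall>k. Suc k < length vs \<longrightarrow> diag_edge (vs ! k) (vs ! Suc k)"
  have nz: "\<And>x. Q x \<noteq> 0" using assms(2) unfolding SQ_def by auto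
  have "successively diag_edge vs" using h(3) nth_succ_iff by blast
  then have "prod_list (map (\<lambda>(a, b). qform f a b) (zip vs (tl vs))) = Q (hd vs) / Q (last vs)"
    by (rule walk_prod[OF _ h(1)]) (auto intro: qform_Q[OF assms] simp: nz)
  then show "prod_list (map (\<lambda>(a, b). qform f a b) (zip vs (tl vs))) = 1" using h(2) nz by simp
qed


lemma exists_other:
  assumes "CARD('m::finite) \<ge> 2"
  shows "\<exists>j::'m. j \<noteq> k"
proof (rule ccontr)
  assume "\<not> ?thesis"
  then have "(UNIV::'m set) = {k}" by auto
  then have "CARD('m) = card {k}" by (rule arg_cong)
  then show False using assms by simp
qed

lemma black_ue: "black (x + ue k) \<longleftrightarrow> \<not> black x"
  by (simp add: black_cs cs_ue1)

lemma koenigs_lambda_sq: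
  fixes f fs :: "int^'m::finite \<Rightarrow> real^'n::finite" and lam :: "int^'m \<Rightarrow> 'm \<Rightarrow> real"
  assumes Qf: "is_Qnet f" and ij: "i \<noteq> j"
    and L: "\<And>x k. fs (x + ue k) - fs x = lam x k *\<^sub>R (f (x + ue k) - f x)"
    and du: "dual_quad (f u) (f (u + ue i)) (f (u + ue i + ue j)) (f (u + ue j))
                  (fs u) (fs (u + ue i)) (fs (u + ue i + ue j)) (fs (u + ue j))"
  shows "sq_r1 f u i j * lam (u + ue i) j = lam u i"
    and "sq_r1 f u i j * lam (u + ue j) i = lam u j"
    and "sq_r2 f u i j * lam u j = lam u i"
proof -
  let ?A = "f u" and ?B = "f (u + ue i)" and ?C = "f (u + ue i + ue j)" and ?D = "f (u + ue j)"
  define M where "M = sqM f u i j"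
  define r1 where "r1 = sq_r1 f u i j"
  define r2 where "r2 = sq_r2 f u i j"
  have q: "qrep ?A ?B ?C ?D M r1 r2" using sq_facts(1)[OF Qf ij, of u] unfolding M_def r1_def r2_def .
  define d1 where "d1 = ?A - M"
  define d2 where "d2 = ?B - M"
  have ind: "indep d1 d2" using q unfolding qrep_def d1_def d2_def by blast
  have r: "r1 \<noteq> 0" "r1 \<noteq> 1" "r2 \<noteq> 0" "r2 \<noteq> 1" using q unfolding qrep_def by auto
  have pA: "?A = M + d1" unfolding d1_def by simp
  have pB: "?B = M + d2" unfolding d2_def by simp
  have pC: "?C = M + r1 *\<^sub>R d1" using q unfolding qrep_def d1_def by (simp add: algebra_simps)
  have pD: "?D = M + r2 *\<^sub>R d2" using q unfolding qrep_def d2_def by (simp add: algebra_simps)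
  define l1 where "l1 = lam u i"
  define l2 where "l2 = lam u j"
  define m2 where "m2 = lam (u + ue i) j"
  define m1 where "m1 = lam (u + ue j) i"
  have eji: "u + ue j + ue i = u + ue i + ue j" by (simp add: add_ac)
  have sB: "fs (u + ue i) - fs u = l1 *\<^sub>R (d2 - d1)" using L[of u i] unfolding l1_def pA pB by simp
  have sD: "fs (u + ue j) - fs u = l2 *\<^sub>R (r2 *\<^sub>R d2 - d1)" using L[of u j] unfolding l2_def pA pD by simp
  have sC1: "fs (u + ue i + ue j) - fs (u + ue i) = m2 *\<^sub>R (r1 *\<^sub>R d1 - d2)"
    using L[of "u + ue i" j] unfolding m2_def pB pC by simp
  have sC2: "fs (u + ue i + ue j) - fs (u + ue j) = m1 *\<^sub>R (r1 *\<^sub>R d1 - r2 *\<^sub>R d2)"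
    using L[of "u + ue j" i] unfolding m1_def eji pD pC by simp
  have CA1: "fs (u + ue i + ue j) - fs u = (m2 * r1 - l1) *\<^sub>R d1 + (l1 - m2) *\<^sub>R d2"
  proof -
    have "fs (u + ue i + ue j) - fs u = (fs (u + ue i + ue j) - fs (u + ue i)) + (fs (u + ue i) - fs u)" by simp
    also have "\<dots> = (m2 * r1 - l1) *\<^sub>R d1 + (l1 - m2) *\<^sub>R d2" unfolding sC1 sB by (simp add: algebra_simps)
    finally show ?thesis .
  qed
  have CA2: "fs (u + ue i + ue j) - fs u = (m1 * r1 - l2) *\<^sub>R d1 + ((l2 - m1) * r2) *\<^sub>R d2"
  proof -
    have "fs (u + ue i + ue j) - fs u = (fs (u + ue i + ue j) - fs (u + ue j)) + (fs (u + ue j) - fs u)" by simp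
    also have "\<dots> = (m1 * r1 - l2) *\<^sub>R d1 + ((l2 - m1) * r2) *\<^sub>R d2" unfolding sC2 sD by (simp add: algebra_simps)
    finally show ?thesis .
  qed
  have DB: "fs (u + ue j) - fs (u + ue i) = (l1 - l2) *\<^sub>R d1 + (l2 * r2 - l1) *\<^sub>R d2"
  proof -
    have "fs (u + ue j) - fs (u + ue i) = (fs (u + ue j) - fs u) - (fs (u + ue i) - fs u)" by simp
    also have "\<dots> = (l1 - l2) *\<^sub>R d1 + (l2 * r2 - l1) *\<^sub>R d2" unfolding sD sB by (simp add: algebra_simps)
    finally show ?thesis .
  qed
  obtain c where c: "fs (u + ue i + ue j) - fs u = c *\<^sub>R (?D - ?B)"
    using du unfolding dual_quad_def par_def by blast
  have DBf: "?D - ?B = (r2 - 1) *\<^sub>R d2" unfolding pD pB by (simp add: algebra_simps)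
  have "(m2 * r1 - l1) *\<^sub>R d1 + (l1 - m2) *\<^sub>R d2 = fs (u + ue i + ue j) - fs u" using CA1 by simp
  also have "\<dots> = c *\<^sub>R (?D - ?B)" by (rule c)
  also have "\<dots> = 0 *\<^sub>R d1 + (c * (r2 - 1)) *\<^sub>R d2" unfolding DBf by simp
  finally have "(m2 * r1 - l1) *\<^sub>R d1 + (l1 - m2) *\<^sub>R d2 = 0 *\<^sub>R d1 + (c * (r2 - 1)) *\<^sub>R d2" .
  then have e1: "m2 * r1 - l1 = 0" using indep_coord[OF ind] by blast
  have "(m1 * r1 - l2) *\<^sub>R d1 + ((l2 - m1) * r2) *\<^sub>R d2 = (m2 * r1 - l1) *\<^sub>R d1 + (l1 - m2) *\<^sub>R d2"
    using CA1 CA2 by simp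
  then have e2: "m1 * r1 - l2 = m2 * r1 - l1" using indep_coord[OF ind] by blast
  obtain c' where c': "fs (u + ue j) - fs (u + ue i) = c' *\<^sub>R (?C - ?A)"
    using du unfolding dual_quad_def par_def by blast
  have CAf: "?C - ?A = (r1 - 1) *\<^sub>R d1" unfolding pC pA by (simp add: algebra_simps)
  have "(l1 - l2) *\<^sub>R d1 + (l2 * r2 - l1) *\<^sub>R d2 = fs (u + ue j) - fs (u + ue i)" using DB by simp
  also have "\<dots> = c' *\<^sub>R (?C - ?A)" by (rule c')
  also have "\<dots> = (c' * (r1 - 1)) *\<^sub>R d1 + 0 *\<^sub>R d2" unfolding CAf by simp
  finally have "(l1 - l2) *\<^sub>R d1 + (l2 * r2 - l1) *\<^sub>R d2 = (c' * (r1 - 1)) *\<^sub>R d1 + 0 *\<^sub>R d2" .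
  then have e3: "l2 * r2 - l1 = 0" using indep_coord[OF ind] by blast
  show "sq_r1 f u i j * lam (u + ue i) j = lam u i" using e1 unfolding r1_def m2_def l1_def by (simp add: mult.commute)
  show "sq_r1 f u i j * lam (u + ue j) i = lam u j" using e1 e2 unfolding r1_def m2_def l1_def m1_def l2_def by (simp add: mult.commute)
  show "sq_r2 f u i j * lam u j = lam u i" using e3 unfolding r2_def l1_def l2_def by (simp add: mult.commute)
qed


lemma koenigs_imp_SQ:
  fixes f :: "int^'m::finite \<Rightarrow> real^'n::finite"
  assumes m2: "CARD('m) \<ge> 2" and Qf: "is_Qnet f" and K: "is_Koenigs f"
  shows "\<exists>Q. SQ f Q"
proof -
  obtain fs :: "int^'m \<Rightarrow> real^'n" where Qfs: "is_Qnet fs" and du: "\<And>u i j. i \<noteq> j \<Longrightarrow>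
        dual_quad (f u) (f (u + ue i)) (f (u + ue i + ue j)) (f (u + ue j))
                  (fs u) (fs (u + ue i)) (fs (u + ue i + ue j)) (fs (u + ue j))"
    using K unfolding is_Koenigs_def by blast
  have "\<forall>x k. \<exists>c. fs (x + ue k) - fs x = c *\<^sub>R (f (x + ue k) - f x)"
  proof (intro allI)
    fix x :: "int^'m" and k :: 'm
    obtain j where "j \<noteq> k" using exists_other[OF m2] by blast
    then show "\<exists>c. fs (x + ue k) - fs x = c *\<^sub>R (f (x + ue k) - f x)"
      using du[of k j x] unfolding dual_quad_def par_def by blast
  qed
  then obtain lam where L: "\<And>x k. fs (x + ue k) - fs x = lam x k *\<^sub>R (f (x + ue k) - f x)" by metis
  have lnz: "lam x k \<noteq> 0" for x k
  proof
    assume "lam x k = 0"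
    then have "fs (x + ue k) = fs x" using L[of x k] by simp
    moreover obtain j where "j \<noteq> k" using exists_other[OF m2] by blast
    then have "k \<noteq> j" by simp
    then have "nondeg_planar_quad (fs x) (fs (x + ue k)) (fs (x + ue k + ue j)) (fs (x + ue j))"
      using Qfs unfolding is_Qnet_def by blast
    then have "distinct [fs x, fs (x + ue k), fs (x + ue k + ue j), fs (x + ue j)]"
      unfolding nondeg_planar_quad_def by (elim conjE)
    ultimately show False by simp
  qed
  have rel: "sq_r1 f u i j * lam (u + ue i) j = lam u i \<and> sq_r1 f u i j * lam (u + ue j) i = lam u j
      \<and> sq_r2 f u i j * lam u j = lam u i" if "i \<noteq> j" for u i j
    using koenigs_lambda_sq[OF Qf that L du[OF that]] by blast
  define \<Omega> where "\<Omega> x k = (if black x then inverse (lam x k) else lam x k)" for x k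
  have \<Omega>nz: "\<Omega> x k \<noteq> 0" for x k unfolding \<Omega>_def using lnz by simp
  have \<Omega>sq: "\<Omega> x i * \<Omega> (x + ue i) j = \<Omega> x j * \<Omega> (x + ue j) i" for x i j
  proof (cases "i = j")
    case True then show ?thesis by simp
  next
    case False
    have e: "lam x i * lam (x + ue j) i = lam x j * lam (x + ue i) j"
      using rel[OF False, of x] by (metis mult.assoc mult.commute)
    show ?thesis using e lnz unfolding \<Omega>_def black_ue by (simp add: field_simps)
  qed
  obtain P where Pnz: "\<And>x. P x \<noteq> 0" and P: "\<And>x k. P (x + ue k) = P x * \<Omega> x k"
    using zm_pot_mult[of \<Omega>, OF \<Omega>nz \<Omega>sq] by blast
  define Q where "Q x = (if black x then P x else inverse (P x))" for x
  have Qnz: "Q x \<noteq> 0" for x unfolding Q_def using Pnz by simp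
  have QL: "Q x * Q (x + ue k) = lam x k" for x k
    unfolding Q_def black_ue P \<Omega>_def using Pnz[of x] lnz[of x k] by (simp add: field_simps)
  have "SQ f Q" unfolding SQ_def
  proof (intro conjI allI impI)
    fix x show "Q x \<noteq> 0" by (rule Qnz)
  next
    fix u i j :: "_" assume ij: "(i::'m) \<noteq> j"
    have r: "sq_r1 f u i j * lam (u + ue i) j = lam u i" "sq_r2 f u i j * lam u j = lam u i"
      using rel[OF ij, of u] by auto
    have "(Q (u + ue i) * Q (u + ue i + ue j)) * sq_r1 f u i j = Q u * Q (u + ue i)"
      using r(1) QL[of u i] QL[of "u + ue i" j] by (simp add: mult.commute)
    then have "Q (u + ue i) * (sq_r1 f u i j * Q (u + ue i + ue j)) = Q (u + ue i) * Q u"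
      by (simp add: algebra_simps)
    then have "sq_r1 f u i j * Q (u + ue i + ue j) = Q u" using Qnz[of "u + ue i"] by simp
    then show "sq_r1 f u i j = Q u / Q (u + ue i + ue j)"
      using Qnz[of "u + ue i + ue j"] by (simp add: field_simps)
    have "(Q u * Q (u + ue j)) * sq_r2 f u i j = Q u * Q (u + ue i)"
      using r(2) QL[of u i] QL[of u j] by (simp add: mult.commute)
    then have "Q u * (sq_r2 f u i j * Q (u + ue j)) = Q u * Q (u + ue i)" by (simp add: algebra_simps)
    then have "sq_r2 f u i j * Q (u + ue j) = Q (u + ue i)" using Qnz[of u] by simp
    then show "sq_r2 f u i j = Q (u + ue i) / Q (u + ue j)"
      using Qnz[of "u + ue j"] by (simp add: field_simps)
  qed
  then show ?thesis by blast
qed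


lemma sq_dual:
  fixes f fs :: "int^'m::finite \<Rightarrow> real^'n::finite"
  assumes Qf: "is_Qnet f" and SQ: "SQ f Q" and ij: "i \<noteq> j"
    and F: "\<And>x k. fs (x + ue k) = fs x + (Q x * Q (x + ue k)) *\<^sub>R (f (x + ue k) - f x)"
  shows "nondeg_planar_quad (fs u) (fs (u + ue i)) (fs (u + ue i + ue j)) (fs (u + ue j))"
    and "dual_quad (f u) (f (u + ue i)) (f (u + ue i + ue j)) (f (u + ue j))
                  (fs u) (fs (u + ue i)) (fs (u + ue i + ue j)) (fs (u + ue j))"
proof -
  let ?A = "f u" and ?B = "f (u + ue i)" and ?C = "f (u + ue i + ue j)" and ?D = "f (u + ue j)"
  define M where "M = sqM f u i j"
  define r1 where "r1 = sq_r1 f u i j"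
  define r2 where "r2 = sq_r2 f u i j"
  have q: "qrep ?A ?B ?C ?D M r1 r2" using sq_facts(1)[OF Qf ij, of u] unfolding M_def r1_def r2_def .
  define d1 where "d1 = ?A - M"
  define d2 where "d2 = ?B - M"
  have ind: "indep d1 d2" using q unfolding qrep_def d1_def d2_def by blast
  have r: "r1 \<noteq> 0" "r1 \<noteq> 1" "r2 \<noteq> 0" "r2 \<noteq> 1" using q unfolding qrep_def by auto
  have pA: "?A = M + d1" unfolding d1_def by simp
  have pB: "?B = M + d2" unfolding d2_def by simp
  have pC: "?C = M + r1 *\<^sub>R d1" using q unfolding qrep_def d1_def by (simp add: algebra_simps)
  have pD: "?D = M + r2 *\<^sub>R d2" using q unfolding qrep_def d2_def by (simp add: algebra_simps)
  define qu where "qu = Q u"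
  define q1 where "q1 = Q (u + ue i)"
  define q2 where "q2 = Q (u + ue j)"
  define q12 where "q12 = Q (u + ue i + ue j)"
  have nz: "qu \<noteq> 0" "q1 \<noteq> 0" "q2 \<noteq> 0" "q12 \<noteq> 0" using SQ unfolding SQ_def qu_def q1_def q2_def q12_def by auto
  have R1: "r1 = qu / q12" "r2 = q1 / q2" using SQ ij unfolding SQ_def r1_def r2_def qu_def q1_def q2_def q12_def by auto
  have eji: "u + ue j + ue i = u + ue i + ue j" by (simp add: add_ac)
  define A' where "A' = fs u"
  have sB: "fs (u + ue i) = A' + (qu * q1) *\<^sub>R (d2 - d1)" using F[of u i] unfolding A'_def qu_def q1_def pA pB by simp
  have sD: "fs (u + ue j) = A' + (qu * q2) *\<^sub>R (r2 *\<^sub>R d2 - d1)" using F[of u j] unfolding A'_def qu_def q2_def pA pD by simp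
  have sC1: "fs (u + ue i + ue j) = fs (u + ue i) + (q1 * q12) *\<^sub>R (r1 *\<^sub>R d1 - d2)"
    using F[of "u + ue i" j] unfolding q1_def q12_def pB pC by simp
  have sC2: "fs (u + ue i + ue j) = fs (u + ue j) + (q2 * q12) *\<^sub>R (r1 *\<^sub>R d1 - r2 *\<^sub>R d2)"
    using F[of "u + ue j" i] unfolding q2_def q12_def eji pD pC by simp
  have k1: "q1 * q12 * r1 = qu * q1" "qu * q2 * r2 = qu * q1" "q2 * q12 * r1 = qu * q2" using nz unfolding R1 by (simp_all add: field_simps)
  have pB': "fs (u + ue i) = A' + (- (qu * q1)) *\<^sub>R d1 + (qu * q1) *\<^sub>R d2" unfolding sB by (simp add: algebra_simps)
  have pC': "fs (u + ue i + ue j) = A' + 0 *\<^sub>R d1 + (qu * q1 - q1 * q12) *\<^sub>R d2"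
  proof -
    have "fs (u + ue i + ue j) = A' + (q1 * q12 * r1 - qu * q1) *\<^sub>R d1 + (qu * q1 - q1 * q12) *\<^sub>R d2"
      unfolding sC1 sB by (simp add: algebra_simps)
    then show ?thesis unfolding k1 by simp
  qed
  have pD': "fs (u + ue j) = A' + (- (qu * q2)) *\<^sub>R d1 + (qu * q1) *\<^sub>R d2"
  proof -
    have "fs (u + ue j) = A' + (- (qu * q2)) *\<^sub>R d1 + (qu * q2 * r2) *\<^sub>R d2"
      unfolding sD by (simp add: algebra_simps)
    then show ?thesis unfolding k1 .
  qed
  define Ms where "Ms = A' + (qu * q1) *\<^sub>R d2"
  have "qrep (fs u) (fs (u + ue i)) (fs (u + ue i + ue j)) (fs (u + ue j)) Ms (q12 / qu) (q2 / q1)"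
    unfolding qrep_def
  proof (intro conjI)
    have e1: "fs u - Ms = (- (qu * q1)) *\<^sub>R d2" unfolding Ms_def A'_def by simp
    have e2: "fs (u + ue i) - Ms = (- (qu * q1)) *\<^sub>R d1" unfolding Ms_def pB' by simp
    show "indep (fs u - Ms) (fs (u + ue i) - Ms)"
      unfolding indep_def e1 e2
    proof (intro allI impI)
      fix \<alpha> \<beta> :: real
      assume "\<alpha> *\<^sub>R (- (qu * q1)) *\<^sub>R d2 + \<beta> *\<^sub>R (- (qu * q1)) *\<^sub>R d1 = 0"
      then have "(- (\<beta> * (qu * q1))) *\<^sub>R d1 + (- (\<alpha> * (qu * q1))) *\<^sub>R d2 = 0" by (simp add: algebra_simps)
      then have "- (\<beta> * (qu * q1)) = 0 \<and> - (\<alpha> * (qu * q1)) = 0" using ind unfolding indep_def by blast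
      then show "\<alpha> = 0 \<and> \<beta> = 0" using nz by simp
    qed
    show "fs (u + ue i + ue j) - Ms = (q12 / qu) *\<^sub>R (fs u - Ms)"
      unfolding e1 pC' Ms_def using nz by (simp add: algebra_simps A'_def)
    have e4: "fs (u + ue j) - Ms = (- (qu * q2)) *\<^sub>R d1" unfolding pD' Ms_def by simp
    show "fs (u + ue j) - Ms = (q2 / q1) *\<^sub>R (fs (u + ue i) - Ms)"
      unfolding e2 e4 using nz by simp
    show "q12 / qu \<noteq> 0" "q2 / q1 \<noteq> 0" using nz by auto
    show "q12 / qu \<noteq> 1" using r(2) nz unfolding R1 by auto
    show "q2 / q1 \<noteq> 1" using r(4) nz unfolding R1 by auto
  qed
  then show "nondeg_planar_quad (fs u) (fs (u + ue i)) (fs (u + ue i + ue j)) (fs (u + ue j))"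
    by (rule qrep_nondeg)
  show "dual_quad ?A ?B ?C ?D (fs u) (fs (u + ue i)) (fs (u + ue i + ue j)) (fs (u + ue j))"
    unfolding dual_quad_def par_def
  proof (intro conjI)
    show "\<exists>c. fs (u + ue i) - fs u = c *\<^sub>R (?B - ?A)"
      using F[of u i] by (intro exI[of _ "Q u * Q (u + ue i)"]) simp
    show "\<exists>c. fs (u + ue i + ue j) - fs (u + ue i) = c *\<^sub>R (?C - ?B)"
      using F[of "u + ue i" j] by (intro exI[of _ "Q (u + ue i) * Q (u + ue i + ue j)"]) simp
    show "\<exists>c. fs (u + ue j) - fs (u + ue i + ue j) = c *\<^sub>R (?D - ?C)"
      using F[of "u + ue j" i] unfolding eji
      by (intro exI[of _ "Q (u + ue j) * Q (u + ue i + ue j)"]) (simp add: algebra_simps)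
    show "\<exists>c. fs u - fs (u + ue j) = c *\<^sub>R (?A - ?D)"
      using F[of u j] by (intro exI[of _ "Q u * Q (u + ue j)"]) (simp add: algebra_simps)
    have DB: "?D - ?B = (r2 - 1) *\<^sub>R d2" unfolding pD pB by (simp add: algebra_simps)
    show "\<exists>c. fs (u + ue i + ue j) - fs u = c *\<^sub>R (?D - ?B)"
      unfolding DB pC' A'_def using r(4)
      by (intro exI[of _ "(qu * q1 - q1 * q12) / (r2 - 1)"]) simp
    have CA: "?C - ?A = (r1 - 1) *\<^sub>R d1" unfolding pC pA by (simp add: algebra_simps)
    have X: "fs (u + ue j) - fs (u + ue i) = (qu * q1 - qu * q2) *\<^sub>R d1" unfolding pD' pB' by (simp add: algebra_simps)
    have Y: "(qu * q1 - qu * q2) / (r1 - 1) * (r1 - 1) = qu * q1 - qu * q2" using r(2) by simp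
    show "\<exists>c. fs (u + ue j) - fs (u + ue i) = c *\<^sub>R (?C - ?A)"
      by (rule exI[of _ "(qu * q1 - qu * q2) / (r1 - 1)"], simp only: CA X scaleR_scaleR Y)
  qed
qed


lemma omega_closed:
  fixes f :: "int^'m::finite \<Rightarrow> real^'n::finite"
  assumes Qf: "is_Qnet f" and SQ: "SQ f Q"
  shows "(Q x * Q (x + ue i)) *\<^sub>R (f (x + ue i) - f x) + (Q (x + ue i) * Q (x + ue i + ue j)) *\<^sub>R (f (x + ue i + ue j) - f (x + ue i))
       = (Q x * Q (x + ue j)) *\<^sub>R (f (x + ue j) - f x) + (Q (x + ue j) * Q (x + ue j + ue i)) *\<^sub>R (f (x + ue j + ue i) - f (x + ue j))"
proof (cases "i = j")
  case True then show ?thesis by simp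
next
  case False
  note ij = False
  let ?A = "f x" and ?B = "f (x + ue i)" and ?C = "f (x + ue i + ue j)" and ?D = "f (x + ue j)"
  define M where "M = sqM f x i j"
  define r1 where "r1 = sq_r1 f x i j"
  define r2 where "r2 = sq_r2 f x i j"
  have q: "qrep ?A ?B ?C ?D M r1 r2" using sq_facts(1)[OF Qf ij, of x] unfolding M_def r1_def r2_def .
  define d1 where "d1 = ?A - M"
  define d2 where "d2 = ?B - M"
  have pA: "?A = M + d1" unfolding d1_def by simp
  have pB: "?B = M + d2" unfolding d2_def by simp
  have pC: "?C = M + r1 *\<^sub>R d1" using q unfolding qrep_def d1_def by (simp add: algebra_simps)
  have pD: "?D = M + r2 *\<^sub>R d2" using q unfolding qrep_def d2_def by (simp add: algebra_simps)
  define qu where "qu = Q x"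
  define q1 where "q1 = Q (x + ue i)"
  define q2 where "q2 = Q (x + ue j)"
  define q12 where "q12 = Q (x + ue i + ue j)"
  have nz: "qu \<noteq> 0" "q1 \<noteq> 0" "q2 \<noteq> 0" "q12 \<noteq> 0" using SQ unfolding SQ_def qu_def q1_def q2_def q12_def by auto
  have R1: "r1 = qu / q12" "r2 = q1 / q2" using SQ ij unfolding SQ_def r1_def r2_def qu_def q1_def q2_def q12_def by auto
  have eji: "x + ue j + ue i = x + ue i + ue j" by (simp add: add_ac)
  have k1: "q1 * q12 * r1 = qu * q1" "qu * q2 * r2 = qu * q1" "q2 * q12 * r1 = qu * q2" "q2 * q12 * r2 = q1 * q12"
    using nz unfolding R1 by (simp_all add: field_simps)
  have L: "(qu * q1) *\<^sub>R (?B - ?A) + (q1 * q12) *\<^sub>R (?C - ?B) = (q1 * q12 * r1 - qu * q1) *\<^sub>R d1 + (qu * q1 - q1 * q12) *\<^sub>R d2"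
    unfolding pA pB pC by (simp add: algebra_simps)
  have R: "(qu * q2) *\<^sub>R (?D - ?A) + (q2 * q12) *\<^sub>R (?C - ?D) = (q2 * q12 * r1 - qu * q2) *\<^sub>R d1 + (qu * q2 * r2 - q2 * q12 * r2) *\<^sub>R d2"
    unfolding pA pD pC by (simp add: algebra_simps)
  show ?thesis
    unfolding eji qu_def[symmetric] q1_def[symmetric] q2_def[symmetric] q12_def[symmetric] L R k1 by simp
qed

lemma SQ_koenigs:
  fixes f :: "int^'m::finite \<Rightarrow> real^'n::finite"
  assumes Qf: "is_Qnet f" and SQ: "SQ f Q"
  shows "is_Koenigs f"
proof -
  obtain fs where F: "\<And>x k. fs (x + ue k) = fs x + (Q x * Q (x + ue k)) *\<^sub>R (f (x + ue k) - f x)"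
    using zm_pot_add[of "\<lambda>x k. (Q x * Q (x + ue k)) *\<^sub>R (f (x + ue k) - f x)"] omega_closed[OF Qf SQ] by blast
  show ?thesis unfolding is_Koenigs_def is_Qnet_def
    using sq_dual[OF Qf SQ _ F] by blast
qed


fun wpf :: "('a \<Rightarrow> 'a \<Rightarrow> real) \<Rightarrow> 'a list \<Rightarrow> real" where
  "wpf g (a # b # r) = g a b * wpf g (b # r)"
| "wpf g _ = 1"

lemma wpf_prod: "prod_list (map (\<lambda>(a, b). g a b) (zip vs (tl vs))) = wpf g vs"
  by (induction vs rule: induct_list012) auto

lemma wpf_snoc: "xs \<noteq> [] \<Longrightarrow> wpf g (xs @ [y]) = wpf g xs * g (last xs) y"
  by (induction g xs rule: wpf.induct) auto

lemma wpf_append: "xs \<noteq> [] \<Longrightarrow> ys \<noteq> [] \<Longrightarrow> wpf g (xs @ ys) = wpf g xs * g (last xs) (hd ys) * wpf g ys"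
proof (induction xs rule: induct_list012)
  case (2 a)
  then obtain c r where "ys = c # r" by (cases ys) auto
  then show ?case by simp
next
  case (3 a b r)
  then show ?case by (simp add: mult.assoc)
qed simp

lemma wpf_nz:
  assumes "successively E vs" "\<And>x y. E x y \<Longrightarrow> g x y \<noteq> 0"
  shows "wpf g vs \<noteq> 0"
  using assms(1)
proof (induction vs rule: induct_list012)
  case (3 x y zs)
  then have "E x y" "successively E (y # zs)" by simp_all
  then show ?case using 3(2) assms(2)[of x y] by simp
qed simp_all

lemma wpf_rev:
  assumes "successively E vs" "\<And>x y. E x y \<Longrightarrow> g y x * g x y = 1"
  shows "wpf g (rev vs) * wpf g vs = 1"
  using assms(1)
proof (induction vs rule: induct_list012)
  case (3 a b r)
  have s: "successively E (b # r)" "E a b" using 3(3) by simp_all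
  have "rev (a # b # r) = rev (b # r) @ [a]" by simp
  moreover have "wpf g (rev (b # r) @ [a]) = wpf g (rev (b # r)) * g (last (rev (b # r))) a"
    by (rule wpf_snoc) simp
  ultimately have "wpf g (rev (a # b # r)) = wpf g (rev (b # r)) * g b a"
    by (simp only: last_rev) simp
  then have "wpf g (rev (a # b # r)) * wpf g (a # b # r) = (wpf g (rev (b # r)) * wpf g (b # r)) * (g b a * g a b)"
    by (simp add: algebra_simps)
  also have "\<dots> = 1" using 3(2)[OF s(1)] assms(2)[OF s(2)] by simp
  finally show ?case .
qed simp_all

lemma walk_in:
  assumes "successively E vs" "\<And>x y. E x y \<Longrightarrow> V x \<Longrightarrow> V y" "V (hd vs)"
  shows "\<forall>v\<in>set vs. V v"
  using assms(1,3)
proof (induction vs rule: induct_list012)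
  case (3 x y zs)
  then have "E x y" "successively E (y # zs)" "V x" by simp_all
  then have "V y" using assms(2) by blast
  then have "\<forall>v\<in>set (y # zs). V v" using 3(2) \<open>successively E (y # zs)\<close> by simp
  then show ?case using \<open>V x\<close> by simp
qed simp_all

lemma walk_potential:
  fixes E :: "'a \<Rightarrow> 'a \<Rightarrow> bool" and g :: "'a \<Rightarrow> 'a \<Rightarrow> real"
  assumes sym: "\<And>x y. E x y \<Longrightarrow> E y x"
    and nz: "\<And>x y. E x y \<Longrightarrow> g x y \<noteq> 0"
    and inv: "\<And>x y. E x y \<Longrightarrow> g y x * g x y = 1"
    and Vcl: "\<And>x y. E x y \<Longrightarrow> V x \<Longrightarrow> V y"
    and Vb: "V b"
    and conn: "\<And>x. V x \<Longrightarrow> \<exists>vs. vs \<noteq> [] \<and> hd vs = b \<and> last vs = x \<and> successively E vs"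
    and closed: "\<And>vs. vs \<noteq> [] \<Longrightarrow> hd vs = last vs \<Longrightarrow> (\<forall>v\<in>set vs. V v) \<Longrightarrow> successively E vs \<Longrightarrow> wpf g vs = 1"
  shows "\<exists>P. (\<forall>x. P x \<noteq> 0) \<and> (\<forall>x y. V x \<longrightarrow> E x y \<longrightarrow> g x y = P x / P y)"
proof -
  define W where "W x = (SOME vs. vs \<noteq> [] \<and> hd vs = b \<and> last vs = x \<and> successively E vs)" for x
  have W: "W x \<noteq> [] \<and> hd (W x) = b \<and> last (W x) = x \<and> successively E (W x)" if "V x" for x
    unfolding W_def using someI_ex[OF conn[OF that]] .
  define P where "P x = (if V x then 1 / wpf g (W x) else 1)" for x
  have Wnz: "wpf g (W x) \<noteq> 0" if "V x" for x using wpf_nz[of E "W x" g] W[OF that] nz by blast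
  have "P x \<noteq> 0" for x unfolding P_def using Wnz by simp
  moreover have "g x y = P x / P y" if Vx: "V x" and e: "E x y" for x y
  proof -
    have Vy: "V y" using Vcl[OF e Vx] .
    note Wx = W[OF Vx] and Wy = W[OF Vy]
    define vs where "vs = W x @ rev (W y)"
    have ne: "vs \<noteq> []" unfolding vs_def using Wx by simp
    have hl: "hd vs = last vs" unfolding vs_def using Wx Wy by (simp add: hd_rev last_rev)
    have "successively (\<lambda>a b. E b a) (W y)"
      by (rule successively_mono[of E "W y"]) (use Wy sym in auto)
    then have sr: "successively E (rev (W y))" by simp
    have sE: "successively E vs" unfolding vs_def successively_append_iff
      using Wx Wy e sr by (simp add: hd_rev)
    have inV: "\<forall>v\<in>set vs. V v" using walk_in[OF sE Vcl] hl Wx Vb unfolding vs_def by simp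
    have "wpf g vs = 1" using closed[OF ne hl inV sE] .
    moreover have "wpf g vs = wpf g (W x) * g x y * wpf g (rev (W y))"
      unfolding vs_def using Wx Wy by (simp add: wpf_append hd_rev)
    moreover have "wpf g (rev (W y)) * wpf g (W y) = 1" using wpf_rev[of E "W y" g] Wy inv by blast
    ultimately have "wpf g (W x) * g x y = wpf g (W y)"
    proof -
      assume a1: "wpf g vs = 1" and a2: "wpf g vs = wpf g (W x) * g x y * wpf g (rev (W y))"
        and a3: "wpf g (rev (W y)) * wpf g (W y) = 1"
      have "wpf g (W x) * g x y = wpf g (W x) * g x y * (wpf g (rev (W y)) * wpf g (W y))" using a3 by simp
      also have "\<dots> = (wpf g (W x) * g x y * wpf g (rev (W y))) * wpf g (W y)" by (simp only: mult.assoc)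
      also have "\<dots> = wpf g (W y)" using a1 a2 by simp
      finally show ?thesis .
    qed
    then show ?thesis unfolding P_def using Vx Vy Wnz[OF Vx] Wnz[OF Vy] by (simp add: field_simps)
  qed
  ultimately show ?thesis by blast
qed


lemma diag_edge_sym: "diag_edge a b \<Longrightarrow> diag_edge b a"
  unfolding diag_edge_def by (simp add: insert_commute)

lemma diag_edge_shift: "diag_edge a b \<Longrightarrow> diag_edge (a + t) (b + t)"
proof -
  assume "diag_edge a b"
  then obtain u i j where ij: "i \<noteq> j" and e: "{a, b} = {u, u + ue i + ue j} \<or> {a, b} = {u + ue i, u + ue j}"
    unfolding diag_edge_def by blast
  from e consider "a = u" "b = u + ue i + ue j" | "a = u + ue i + ue j" "b = u" | "a = u + ue i" "b = u + ue j"
    | "a = u + ue j" "b = u + ue i" by (auto simp: doubleton_eq_iff)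
  then have "{a + t, b + t} = {u + t, u + t + ue i + ue j} \<or> {a + t, b + t} = {u + t + ue i, u + t + ue j}"
    by cases (simp_all add: add_ac insert_commute)
  then show ?thesis unfolding diag_edge_def using ij by blast
qed

lemma diag_edge_black: "diag_edge a b \<Longrightarrow> black a \<longleftrightarrow> black b"
proof -
  assume "diag_edge a b"
  then obtain u i j where ij: "i \<noteq> j" and e: "{a, b} = {u, u + ue i + ue j} \<or> {a, b} = {u + ue i, u + ue j}"
    unfolding diag_edge_def by blast
  have "black (u + ue i + ue j) \<longleftrightarrow> black u" by (simp add: black_ue)
  moreover have "black (u + ue i) \<longleftrightarrow> black (u + ue j)" by (simp add: black_ue)
  ultimately show ?thesis using e by (auto simp: doubleton_eq_iff)
qed

lemma axis_m1: "axis i (-1::int) = - ue i" by (simp add: vec_eq_iff axis_def ue_nth)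
lemma axis_1: "axis i (1::int) = ue i" by (simp add: ue_def)

lemma diag_edgeI1: "i \<noteq> j \<Longrightarrow> a = u \<Longrightarrow> b = u + ue i + ue j \<Longrightarrow> diag_edge a b"
  unfolding diag_edge_def by blast
lemma diag_edgeI2: "i \<noteq> j \<Longrightarrow> a = u + ue i \<Longrightarrow> b = u + ue j \<Longrightarrow> diag_edge a b"
  unfolding diag_edge_def by blast

lemma diag_step:
  fixes y :: "int^'m::finite"
  assumes ij: "i \<noteq> j" and "s = 1 \<or> s = -1" "t = 1 \<or> t = -1"
  shows "diag_edge y (y + axis i s + axis j t)"
  using assms(2,3)
proof (elim disjE)
  assume "s = 1" "t = 1"
  then show ?thesis by (intro diag_edgeI1[OF ij, of _ y]) (simp_all add: axis_1)
next
  assume "s = 1" "t = -1"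
  then show ?thesis by (intro diag_edgeI2[OF ij[symmetric], of _ "y - ue j"]) (simp_all add: axis_1 axis_m1)
next
  assume "s = -1" "t = 1"
  then show ?thesis by (intro diag_edgeI2[OF ij, of _ "y - ue i"]) (simp_all add: axis_1 axis_m1)
next
  assume "s = -1" "t = -1"
  then have "diag_edge (y + axis i s + axis j t) y"
    by (intro diag_edgeI1[OF ij, of _ "y - ue i - ue j"]) (simp_all add: axis_1 axis_m1)
  then show ?thesis by (rule diag_edge_sym)
qed

definition nrm :: "int^'m::finite \<Rightarrow> int" where "nrm x = (\<Sum>k\<in>UNIV. \<bar>x $ k\<bar>)"

lemma cs_axis: "cs (axis i s) = s" by (simp add: cs_def axis_def)

lemma conn_black:
  fixes x :: "int^'m::finite"
  assumes m2: "CARD('m) \<ge> 2"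
  shows "black x \<Longrightarrow> \<exists>vs. vs \<noteq> [] \<and> hd vs = 0 \<and> last vs = x \<and> successively diag_edge vs"
proof (induction x rule: measure_induct_rule[where f="\<lambda>x. nat (nrm x)"])
  case (less x)
  show ?case
  proof (cases "x = 0")
    case True then show ?thesis by (intro exI[of _ "[0]"]) simp
  next
    case False
    then obtain i where xi: "x $ i \<noteq> 0" by (auto simp: vec_eq_iff)
    define s where "s = sgn (x $ i)"
    have s: "s = 1 \<or> s = -1" "\<bar>x $ i\<bar> = s * x $ i" using xi unfolding s_def by (auto simp: sgn_if abs_if)
    show ?thesis
    proof (cases "\<exists>j. j \<noteq> i \<and> x $ j \<noteq> 0")
      case True
      then obtain j where j: "j \<noteq> i" "x $ j \<noteq> 0" by blast
      define t where "t = sgn (x $ j)"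
      have t: "t = 1 \<or> t = -1" "\<bar>x $ j\<bar> = t * x $ j" using j unfolding t_def by (auto simp: sgn_if abs_if)
      define y where "y = x - axis i s - axis j t"
      have yx: "y + axis i s + axis j t = x" unfolding y_def by simp
      have bly: "black y" using less.prems s(1) t(1) unfolding black_cs y_def
        by (auto simp: cs_diff cs_axis)
      have comp: "\<bar>y $ k\<bar> + (if k = i then 1 else 0) + (if k = j then 1 else 0) = \<bar>x $ k\<bar>" for k
      proof -
        have yk: "y $ k = x $ k - (if k = i then s else 0) - (if k = j then t else 0)" unfolding y_def by (simp add: axis_def)
        consider "k = i" | "k = j" | "k \<noteq> i" "k \<noteq> j" by blast
        then show ?thesis
        proof cases
          case 1 then show ?thesis unfolding yk using j(1) s xi by (cases "s = 1") auto
        next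
          case 2 then show ?thesis unfolding yk using j t by (cases "t = 1") auto
        qed (simp add: yk)
      qed
      have "(\<Sum>k\<in>UNIV. \<bar>y $ k\<bar> + (if k = i then 1 else 0) + (if k = j then 1 else 0)) = nrm x"
        unfolding nrm_def comp ..
      then have "nrm y + 2 = nrm x" unfolding nrm_def by (simp add: sum.distrib)
      moreover have "nrm y \<ge> 0" unfolding nrm_def by (simp add: sum_nonneg)
      ultimately have lt: "nat (nrm y) < nat (nrm x)" by simp
      obtain vs where vs: "vs \<noteq> []" "hd vs = 0" "last vs = y" "successively diag_edge vs"
        using less.IH[OF lt bly] by blast
      have e: "diag_edge y x" using diag_step[OF j(1)[symmetric] s(1) t(1), of y] yx by simp
      show ?thesis
        by (rule exI[of _ "vs @ [x]"]) (use vs e in \<open>simp add: successively_append_iff\<close>)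
    next
      case False
      then have oth: "\<And>k. k \<noteq> i \<Longrightarrow> x $ k = 0" by blast
      obtain j where j: "j \<noteq> i" using exists_other[OF m2] by blast
      have "cs x = x $ i" unfolding cs_def using oth by (subst sum.remove[of _ i]) auto
      then have ev: "even (x $ i)" using less.prems by (simp add: black_cs)
      then have xi2: "\<bar>x $ i\<bar> \<ge> 2" using xi by presburger
      define z where "z = x - axis i (2 * s)"
      define y where "y = z + axis i s + axis j 1"
      have xy: "y + axis i s + axis j (-1) = x" unfolding y_def z_def
        by (simp add: vec_eq_iff axis_def)
      have bz: "black z" using less.prems s(1) unfolding black_cs z_def
        by (auto simp: cs_diff cs_axis)
      have comp: "\<bar>z $ k\<bar> + (if k = i then 2 else 0) = \<bar>x $ k\<bar>" for k
      proof -
        have zk: "z $ k = x $ k - (if k = i then 2 * s else 0)" unfolding z_def by (simp add: axis_def)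
        show ?thesis
        proof (cases "k = i")
          case True then show ?thesis unfolding zk using s xi2 by (cases "s = 1") auto
        qed (simp add: zk)
      qed
      have "(\<Sum>k\<in>UNIV. \<bar>z $ k\<bar> + (if k = i then 2 else 0)) = nrm x"
        unfolding nrm_def comp ..
      then have "nrm z + 2 = nrm x" unfolding nrm_def by (simp add: sum.distrib)
      moreover have "nrm z \<ge> 0" unfolding nrm_def by (simp add: sum_nonneg)
      ultimately have lt: "nat (nrm z) < nat (nrm x)" by simp
      obtain vs where vs: "vs \<noteq> []" "hd vs = 0" "last vs = z" "successively diag_edge vs"
        using less.IH[OF lt bz] by blast
      have e1: "diag_edge z y" unfolding y_def using diag_step[OF j[symmetric] s(1), of 1 z] by simp
      have e2: "diag_edge y x" using diag_step[OF j[symmetric] s(1), of "-1" y] xy by simp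
      show ?thesis
        by (rule exI[of _ "vs @ [y, x]"]) (use vs e1 e2 in \<open>simp add: successively_append_iff\<close>)
    qed
  qed
qed


lemma edge_q:
  fixes f :: "int^'m::finite \<Rightarrow> real^'n::finite"
  assumes Qf: "is_Qnet f" and e: "diag_edge x y"
  shows "qform f x y \<noteq> 0" and "qform f y x * qform f x y = 1"
proof -
  obtain u i j where ij: "i \<noteq> j" and e: "{x, y} = {u, u + ue i + ue j} \<or> {x, y} = {u + ue i, u + ue j}"
    using e unfolding diag_edge_def by blast
  note F = sq_facts[OF Qf ij, of u]
  have r: "sq_r1 f u i j \<noteq> 0" "sq_r2 f u i j \<noteq> 0" using F(1) unfolding qrep_def by auto
  from e consider "x = u" "y = u + ue i + ue j" | "y = u" "x = u + ue i + ue j" | "x = u + ue i" "y = u + ue j"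
    | "y = u + ue i" "x = u + ue j"
    by (auto simp: doubleton_eq_iff)
  then have "qform f x y \<noteq> 0 \<and> qform f y x * qform f x y = 1"
    by cases (use F r in auto)
  then show "qform f x y \<noteq> 0" and "qform f y x * qform f x y = 1" by auto
qed

lemma closed_wpf:
  assumes "closed_on col f" "vs \<noteq> []" "hd vs = last vs" "\<forall>v\<in>set vs. col v" "successively diag_edge vs"
  shows "wpf (qform f) vs = 1"
  using assms unfolding closed_on_def nth_succ_iff wpf_prod by blast

lemma closed_imp_SQ:
  fixes f :: "int^'m::finite \<Rightarrow> real^'n::finite"
  assumes m2: "CARD('m) \<ge> 2" and Qf: "is_Qnet f" and cb: "closed_on black f" and cw: "closed_on white f"
  shows "\<exists>Q. SQ f Q"
proof -
  have nz: "\<And>x y. diag_edge x y \<Longrightarrow> qform f x y \<noteq> 0" and inv: "\<And>x y. diag_edge x y \<Longrightarrow> qform f y x * qform f x y = 1"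
    using edge_q[OF Qf] by blast+
  have b0: "black (0::int^'m)" by (simp add: black_def)
  obtain Pb where Pb: "\<forall>x. Pb x \<noteq> 0" "\<forall>x y. black x \<longrightarrow> diag_edge x y \<longrightarrow> qform f x y = Pb x / Pb y"
    using walk_potential[of diag_edge "qform f" black 0, OF diag_edge_sym nz inv _ b0 conn_black[OF m2] closed_wpf[OF cb]]
      diag_edge_black by blast
  define k0 :: 'm where "k0 = undefined"
  have w0: "white (ue k0)" by (simp add: white_cs cs_ue)
  have wb: "white x \<longleftrightarrow> \<not> black x" for x :: "int^'m" by (simp add: white_cs black_cs)
  have connw: "\<exists>vs. vs \<noteq> [] \<and> hd vs = ue k0 \<and> last vs = x \<and> successively diag_edge vs" if "white x" for x
  proof -
    have "black (x - ue k0)" using that by (simp add: white_cs black_cs cs_diff cs_ue)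
    then obtain vs where vs: "vs \<noteq> []" "hd vs = 0" "last vs = x - ue k0" "successively diag_edge vs"
      using conn_black[OF m2] by blast
    have "successively diag_edge (map (\<lambda>v. v + ue k0) vs)"
      unfolding successively_map by (rule successively_mono[OF vs(4)]) (rule diag_edge_shift)
    moreover have "hd (map (\<lambda>v. v + ue k0) vs) = ue k0" "last (map (\<lambda>v. v + ue k0) vs) = x"
      using vs by (simp_all add: hd_map last_map)
    ultimately show ?thesis using vs(1) by (intro exI[of _ "map (\<lambda>v. v + ue k0) vs"]) simp
  qed
  obtain Pw where Pw: "\<forall>x. Pw x \<noteq> 0" "\<forall>x y. white x \<longrightarrow> diag_edge x y \<longrightarrow> qform f x y = Pw x / Pw y"
    using walk_potential[of diag_edge "qform f" white "ue k0", OF diag_edge_sym nz inv _ w0 connw closed_wpf[OF cw]]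
      diag_edge_black wb by blast
  define Q where "Q x = (if black x then Pb x else Pw x)" for x
  have QE: "qform f x y = Q x / Q y" if "diag_edge x y" for x y
    using Pb Pw that diag_edge_black[OF that] wb unfolding Q_def by auto
  have "SQ f Q" unfolding SQ_def
  proof (intro conjI allI impI)
    fix x show "Q x \<noteq> 0" unfolding Q_def using Pb Pw by simp
  next
    fix u i j :: "_" assume ij: "(i::'m) \<noteq> j"
    show "sq_r1 f u i j = Q u / Q (u + ue i + ue j)"
      using sq_facts(2)[OF Qf ij, of u] QE[OF diag_edgeI1[OF ij refl refl]] by simp
    show "sq_r2 f u i j = Q (u + ue i) / Q (u + ue j)"
      using sq_facts(4)[OF Qf ij, of u] QE[OF diag_edgeI2[OF ij refl refl]] by simp
  qed
  then show ?thesis by blast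
qed


theorem mainTheorem2:
  fixes f :: "int^'m::finite \<Rightarrow> real^'n::finite"
  assumes "CARD('m) \<ge> 2" and "CARD('n) \<ge> 3"
    and "is_Qnet f"
  shows "is_Koenigs f \<longleftrightarrow> closed_on black f \<and> closed_on white f"
proof
  assume "is_Koenigs f"
  then obtain Q where "SQ f Q" using koenigs_imp_SQ[OF assms(1) assms(3)] by blast
  then show "closed_on black f \<and> closed_on white f" using closed_from_Q[OF assms(3)] by blast
next
  assume "closed_on black f \<and> closed_on white f"
  then obtain Q where "SQ f Q" using closed_imp_SQ[OF assms(1) assms(3)] by blast
  then show "is_Koenigs f" using SQ_koenigs[OF assms(3)] by blast
qed

end
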